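(* Let $d,\tilde d\in\mathbb{N}$, $G\subseteq\mathbb{R}^d$, $\tilde G\subseteq\mathbb{R}^{\tilde d}$, and let $\rho\colon G\to(0,\infty)$, $\tilde\rho\colon\tilde G\to(0,\infty)$ be Lebesgue integrable with $\ell_\rho(t)=\ell_{\tilde\rho}(t)$ for all $t\in(0,\infty)$. Let $\pi,\tilde\pi$ be the distributions induced by $\rho,\tilde\rho$, and $\mu$ the (common) auxiliary measure. Then $Q_\rho(t,B)=Q_{\tilde\rho}(t,B)$ for all $t\in(0,\infty)$ and Borel $B\subseteq(0,\infty)$, and \[ \mathrm{gap}_\pi(U_\rho)=\mathrm{gap}_\mu(Q_\rho)=\mathrm{gap}_\mu(Q_{\tilde\rho})=\mathrm{gap}_{\tilde\pi}(U_{\tilde\rho}). \]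
   Context: For an integrable $\rho\colon G\to(0,\infty)$, $G\subseteq\mathbb{R}^d$: $\pi(A)=\int_A\rho/\int_G\rho$; $G(t)=\{x\in G:\rho(x)\ge t\}$; $\ell_\rho(t)=\lambda_d(G(t))$; $U_t$ uniform on $G(t)$; $U_\rho(x,A)=\frac{1}{\rho(x)}\int_0^{\rho(x)}U_t(A)\,\mathrm{d}t$ (simple slice sampling); $\mu(B)=\int_B\ell_\rho(t)\,\mathrm{d}t/\int_0^\infty\ell_\rho(r)\,\mathrm{d}r$ on $(0,\infty)$; $Q_\rho(t,B)=\frac{1}{\lambda_d(G(t))}\int_{G(t)}\frac{\lambda_1(B\cap[0,\rho(x)])}{\rho(x)}\,\mathrm{d}x$. Spectral gaps: $\mathrm{gap}_\pi(U_\rho)=1-\|U_\rho-\mathbb{E}_\pi\|_{L_2(\pi)\to L_2(\pi)}$, $\mathrm{gap}_\mu(Q_\rho)=1-\|Q_\rho-\mathbb{E}_\mu\|_{L_2(\mu)\to L_2(\mu)}$, with $\mathbb{E}_\pi,\mathbb{E}_\mu$ mapping a function to the constant equal to its mean; the operators act by $Kf(x)=\int f(y)K(x,\mathrm{d}y)$. *)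

theory Defs
  imports "HOL-Analysis.Analysis"
begin

definition superlevel :: "'a set \<Rightarrow> ('a \<Rightarrow> real) \<Rightarrow> real \<Rightarrow> 'a set" where
  "superlevel G \<rho> t = {x \<in> G. t \<le> \<rho> x}"

definition level_fun :: "'a::euclidean_space set \<Rightarrow> ('a \<Rightarrow> real) \<Rightarrow> real \<Rightarrow> real" where
  "level_fun G \<rho> t = measure lebesgue (superlevel G \<rho> t)"

definition target :: "'a::euclidean_space set \<Rightarrow> ('a \<Rightarrow> real) \<Rightarrow> 'a measure" where
  "target G \<rho> = density lebesgue
     (\<lambda>x. ennreal (indicator G x * \<rho> x / (LINT y:G|lebesgue. \<rho> y)))"

definition unif_level :: "'a::euclidean_space set \<Rightarrow> ('a \<Rightarrow> real) \<Rightarrow> real \<Rightarrow> 'a measure" where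
  "unif_level G \<rho> t = uniform_measure lebesgue (superlevel G \<rho> t)"

definition slice_kernel :: "'a::euclidean_space set \<Rightarrow> ('a \<Rightarrow> real) \<Rightarrow> 'a \<Rightarrow> 'a measure" where
  "slice_kernel G \<rho> x = measure_of UNIV (sets lebesgue)
     (\<lambda>A. ennreal ((1 / \<rho> x) * (LINT t:{0..\<rho> x}|lborel. measure (unif_level G \<rho> t) A)))"

definition aux_measure :: "'a::euclidean_space set \<Rightarrow> ('a \<Rightarrow> real) \<Rightarrow> real measure" where
  "aux_measure G \<rho> = density lborel
     (\<lambda>t. ennreal (indicator {0<..} t * level_fun G \<rho> t / (LINT r:{0<..}|lborel. level_fun G \<rho> r)))"

definition Q_fun :: "'a::euclidean_space set \<Rightarrow> ('a \<Rightarrow> real) \<Rightarrow> real \<Rightarrow> real set \<Rightarrow> real" where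
  "Q_fun G \<rho> t B = (1 / measure lebesgue (superlevel G \<rho> t)) *
     (LINT x:superlevel G \<rho> t|lebesgue. measure lborel (B \<inter> {0..\<rho> x}) / \<rho> x)"

definition Q_kernel :: "'a::euclidean_space set \<Rightarrow> ('a \<Rightarrow> real) \<Rightarrow> real \<Rightarrow> real measure" where
  "Q_kernel G \<rho> t = measure_of UNIV (sets borel) (\<lambda>B. ennreal (Q_fun G \<rho> t B))"

definition kernel_op :: "('a \<Rightarrow> 'b measure) \<Rightarrow> ('b \<Rightarrow> real) \<Rightarrow> 'a \<Rightarrow> real" where
  "kernel_op K f = (\<lambda>x. \<integral>y. f y \<partial>K x)"

definition L2_opnorm :: "'a measure \<Rightarrow> (('a \<Rightarrow> real) \<Rightarrow> ('a \<Rightarrow> real)) \<Rightarrow> ereal" where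
  "L2_opnorm M T =
    (let N = (SUP f \<in> {f \<in> borel_measurable M. (\<integral>\<^sup>+x. ennreal ((f x)\<^sup>2) \<partial>M) \<le> 1}.
                 (\<integral>\<^sup>+x. ennreal ((T f x)\<^sup>2) \<partial>M))
     in if N = \<infinity> then \<infinity> else ereal (sqrt (enn2real N)))"

definition spectral_gap :: "'a measure \<Rightarrow> ('a \<Rightarrow> 'a measure) \<Rightarrow> ereal" where
  "spectral_gap M K = 1 - L2_opnorm M (\<lambda>f x. kernel_op K f x - (\<integral>y. f y \<partial>M))"

end

theory Submission
  imports Defs "HOL-Probability.Probability"
begin


lemma sigma_finite_lebesgue: "sigma_finite_measure (lebesgue :: 'a::euclidean_space measure)"
proof -
  interpret lborel: sigma_finite_measure "lborel :: 'a measure" by (rule sigma_finite_lborel)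
  obtain A :: "'a set set" where A: "countable A" "A \<subseteq> sets lborel" "\<Union>A = space lborel"
    "\<forall>a\<in>A. emeasure lborel a \<noteq> \<infinity>"
    using lborel.sigma_finite_countable by blast
  show ?thesis
    unfolding sigma_finite_measure_def
    by (rule exI[of _ A]) (use A in \<open>auto simp: emeasure_completion\<close>)
qed

interpretation lebesgue_sf: sigma_finite_measure "lebesgue :: 'a::euclidean_space measure"
  by (rule sigma_finite_lebesgue)

interpretation leb_lborel: pair_sigma_finite "lebesgue :: 'a::euclidean_space measure" "lborel :: real measure"
  by (simp add: pair_sigma_finite_def sigma_finite_lebesgue sigma_finite_lborel)

lemma measure_of_eq_measure:
  assumes "space M = \<Omega>" "\<And>A. A \<in> sets M \<Longrightarrow> F A = emeasure M A"
  shows "measure_of \<Omega> (sets M) F = M"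
proof -
  have "measure_of \<Omega> (sets M) F = measure_of \<Omega> (sets M) (emeasure M)"
  proof (rule measure_of_eq)
    show "sets M \<subseteq> Pow \<Omega>" using sets.sets_into_space assms(1) by auto
    fix a assume "a \<in> sigma_sets \<Omega> (sets M)"
    then have "a \<in> sets M" using assms(1) sets.sigma_sets_eq by metis
    then show "F a = emeasure M a" by (rule assms(2))
  qed
  also have "\<dots> = M" using measure_of_of_measure[of M] assms(1) by simp
  finally show ?thesis .
qed

lemma cauchy_schwarz_integral:
  fixes f g :: "'a \<Rightarrow> real"
  assumes fm: "f \<in> borel_measurable M" and gm: "g \<in> borel_measurable M"
    and fi: "integrable M (\<lambda>x. (f x)\<^sup>2)" and gi: "integrable M (\<lambda>x. (g x)\<^sup>2)"
  shows "integrable M (\<lambda>x. f x * g x)"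
    and "(\<integral>x. f x * g x \<partial>M)\<^sup>2 \<le> (\<integral>x. (f x)\<^sup>2 \<partial>M) * (\<integral>x. (g x)\<^sup>2 \<partial>M)"
proof -
  show fgi: "integrable M (\<lambda>x. f x * g x)"
  proof (rule Bochner_Integration.integrable_bound[OF Bochner_Integration.integrable_add[OF fi gi]])
    show "(\<lambda>x. f x * g x) \<in> borel_measurable M" using fm gm by measurable
    show "AE x in M. norm (f x * g x) \<le> norm ((f x)\<^sup>2 + (g x)\<^sup>2)"
    proof (rule AE_I2)
      fix x
      have h: "\<bar>a * b\<bar> \<le> a\<^sup>2 + b\<^sup>2" for a b :: real
      proof -
        have "0 \<le> (\<bar>a\<bar> - \<bar>b\<bar>)\<^sup>2" by simp
        then have "2 * \<bar>a\<bar> * \<bar>b\<bar> \<le> a\<^sup>2 + b\<^sup>2" by (simp add: power2_diff)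
        moreover have "0 \<le> \<bar>a\<bar> * \<bar>b\<bar>" by simp
        ultimately show ?thesis unfolding abs_mult by linarith
      qed
      show "norm (f x * g x) \<le> norm ((f x)\<^sup>2 + (g x)\<^sup>2)"
        using h[of "f x" "g x"] by simp
    qed
  qed
  define a where "a = (\<integral>x. (g x)\<^sup>2 \<partial>M)"
  define b where "b = (\<integral>x. f x * g x \<partial>M)"
  define c where "c = (\<integral>x. (f x)\<^sup>2 \<partial>M)"
  have key: "0 \<le> c - 2 * s * b + s\<^sup>2 * a" for s
  proof -
    have "(\<lambda>x. (f x - s * g x)\<^sup>2) = (\<lambda>x. (f x)\<^sup>2 - 2 * s * (f x * g x) + s\<^sup>2 * (g x)\<^sup>2)"
      by (auto simp: power2_eq_square algebra_simps)
    then have "(\<integral>x. (f x - s * g x)\<^sup>2 \<partial>M) = c - 2 * s * b + s\<^sup>2 * a"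
      using fi gi fgi by (simp add: a_def b_def c_def)
    moreover have "0 \<le> (\<integral>x. (f x - s * g x)\<^sup>2 \<partial>M)" by simp
    ultimately show ?thesis by simp
  qed
  have a0: "0 \<le> a" unfolding a_def by simp
  show "b\<^sup>2 \<le> c * a"
  proof (cases "a = 0")
    case True
    have "b = 0"
    proof (rule ccontr)
      assume "b \<noteq> 0"
      have "0 \<le> c - 2 * ((c + 1) / (2 * b)) * b" using key[of "(c+1)/(2*b)"] True by simp
      also have "\<dots> = -1" using \<open>b \<noteq> 0\<close> by (simp add: field_simps)
      finally show False by simp
    qed
    then show ?thesis using True by simp
  next
    case False
    then have ap: "a > 0" using a0 by simp
    have "0 \<le> c - 2 * (b / a) * b + (b/a)\<^sup>2 * a" by (rule key)
    also have "\<dots> = c - b\<^sup>2 / a" using ap by (simp add: field_simps power2_eq_square)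
    finally have "b\<^sup>2 / a \<le> c" by simp
    then show ?thesis using ap by (simp add: field_simps mult.commute)
  qed
qed


lemma zero_measure_integral:
  assumes "emeasure P (space P) = 0"
  shows "integral\<^sup>L P (f :: 'a \<Rightarrow> real) = 0" "integral\<^sup>N P g = 0"
proof -
  have ae: "AE x in P. False"
    by (rule AE_I'[of "space P"]) (use assms in auto)
  show "integral\<^sup>L P f = 0"
    by (rule integral_eq_zero_AE) (use ae in auto)
  have "integral\<^sup>N P g = integral\<^sup>N P (\<lambda>_. 0)"
    by (rule nn_integral_cong_AE) (use ae in auto)
  then show "integral\<^sup>N P g = 0" by simp
qed

lemma jensen_sq:
  fixes f :: "'a \<Rightarrow> real"
  assumes P: "prob_space P \<or> emeasure P (space P) = 0" and fm: "f \<in> borel_measurable P"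
  shows "ennreal ((\<integral>x. f x \<partial>P)\<^sup>2) \<le> (\<integral>\<^sup>+x. ennreal ((f x)\<^sup>2) \<partial>P)"
proof (cases "emeasure P (space P) = 0")
  case True
  then show ?thesis using zero_measure_integral[OF True] by simp
next
  case False
  then interpret prob_space P using P by auto
  show ?thesis
  proof (cases "integrable P (\<lambda>x. (f x)\<^sup>2)")
    case True
    have "(\<integral>x. f x * 1 \<partial>P)\<^sup>2 \<le> (\<integral>x. (f x)\<^sup>2 \<partial>P) * (\<integral>x. 1\<^sup>2 \<partial>P)"
      by (rule cauchy_schwarz_integral(2)) (use fm True in auto)
    then have "(\<integral>x. f x \<partial>P)\<^sup>2 \<le> (\<integral>x. (f x)\<^sup>2 \<partial>P)" by (simp add: prob_space)
    moreover have "(\<integral>\<^sup>+x. ennreal ((f x)\<^sup>2) \<partial>P) = ennreal (\<integral>x. (f x)\<^sup>2 \<partial>P)"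
      by (rule nn_integral_eq_integral) (use True in auto)
    ultimately show ?thesis by simp
  next
    case False
    have "\<not> (\<integral>\<^sup>+x. ennreal ((f x)\<^sup>2) \<partial>P) < \<infinity>"
      using integrableI_nonneg[of "\<lambda>x. (f x)\<^sup>2" P] False fm by auto
    then show ?thesis using top.not_eq_extremum by force
  qed
qed

lemma enn2real_le_self: "ennreal (enn2real x) \<le> x"
  by (cases x) auto

lemma integral_bind_real:
  fixes f :: "'b \<Rightarrow> real"
  assumes K[measurable]: "K \<in> measurable W (subprob_algebra N)" and f[measurable]: "f \<in> borel_measurable N"
    and fin: "(\<integral>\<^sup>+x. ennreal \<bar>f x\<bar> \<partial>(W \<bind> K)) < \<infinity>"
    and ne: "space W \<noteq> {}"
  shows "AE t in W. integrable (K t) f" "integrable W (\<lambda>t. integral\<^sup>L (K t) f)"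
    "integral\<^sup>L (W \<bind> K) f = (\<integral>t. integral\<^sup>L (K t) f \<partial>W)"
proof -
  have setsK: "t \<in> space W \<Longrightarrow> sets (K t) = sets N" for t
    using K by (rule sets_kernel)
  have fK: "t \<in> space W \<Longrightarrow> f \<in> borel_measurable (K t)" for t
    using setsK[of t] by (simp cong: measurable_cong_sets)
  have sb: "sets (W \<bind> K) = sets N" using setsK ne by (rule sets_bind)
  have fB[measurable]: "f \<in> borel_measurable (W \<bind> K)" using sb by (simp cong: measurable_cong_sets)
  have nb: "\<And>h. h \<in> borel_measurable N \<Longrightarrow> (\<integral>\<^sup>+x. h x \<partial>(W \<bind> K)) = (\<integral>\<^sup>+t. (\<integral>\<^sup>+x. h x \<partial>K t) \<partial>W)"
    by (rule nn_integral_bind[OF _ K])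
  have "(\<integral>\<^sup>+t. (\<integral>\<^sup>+x. ennreal \<bar>f x\<bar> \<partial>K t) \<partial>W) < \<infinity>"
    using fin nb[of "\<lambda>x. ennreal \<bar>f x\<bar>"] by simp
  then have "AE t in W. (\<integral>\<^sup>+x. ennreal \<bar>f x\<bar> \<partial>K t) \<noteq> \<infinity>"
    by (intro nn_integral_PInf_AE) auto
  then show ae: "AE t in W. integrable (K t) f"
    using AE_space by eventually_elim (auto simp: integrable_iff_bounded fK less_top)
  define p where "p t = (\<integral>\<^sup>+x. ennreal (f x) \<partial>K t)" for t
  define q where "q t = (\<integral>\<^sup>+x. ennreal (- f x) \<partial>K t)" for t
  have pm[measurable]: "p \<in> borel_measurable W" unfolding p_def by measurable
  have qm[measurable]: "q \<in> borel_measurable W" unfolding q_def by measurable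
  have pB: "(\<integral>\<^sup>+t. p t \<partial>W) = (\<integral>\<^sup>+x. ennreal (f x) \<partial>(W \<bind> K))"
    unfolding p_def by (rule nb[symmetric]) measurable
  have qB: "(\<integral>\<^sup>+t. q t \<partial>W) = (\<integral>\<^sup>+x. ennreal (- f x) \<partial>(W \<bind> K))"
    unfolding q_def by (rule nb[symmetric]) measurable
  have pfin: "(\<integral>\<^sup>+x. ennreal (f x) \<partial>(W \<bind> K)) < \<infinity>"
    by (rule le_less_trans[OF _ fin]) (auto intro!: nn_integral_mono ennreal_leI)
  have qfin: "(\<integral>\<^sup>+x. ennreal (- f x) \<partial>(W \<bind> K)) < \<infinity>"
    by (rule le_less_trans[OF _ fin]) (auto intro!: nn_integral_mono ennreal_leI)
  have pae: "AE t in W. p t \<noteq> \<infinity>" using pfin pB by (intro nn_integral_PInf_AE) auto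
  have qae: "AE t in W. q t \<noteq> \<infinity>" using qfin qB by (intro nn_integral_PInf_AE) auto
  have pi: "integrable W (\<lambda>t. enn2real (p t))"
  proof (rule integrableI_bounded)
    have "(\<integral>\<^sup>+t. ennreal (norm (enn2real (p t))) \<partial>W) \<le> (\<integral>\<^sup>+t. p t \<partial>W)"
      by (rule nn_integral_mono) (simp add: enn2real_le_self)
    then show "(\<integral>\<^sup>+t. ennreal (norm (enn2real (p t))) \<partial>W) < \<infinity>"
      using pfin pB by simp
  qed measurable
  have qi: "integrable W (\<lambda>t. enn2real (q t))"
  proof (rule integrableI_bounded)
    have "(\<integral>\<^sup>+t. ennreal (norm (enn2real (q t))) \<partial>W) \<le> (\<integral>\<^sup>+t. q t \<partial>W)"
      by (rule nn_integral_mono) (simp add: enn2real_le_self)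
    then show "(\<integral>\<^sup>+t. ennreal (norm (enn2real (q t))) \<partial>W) < \<infinity>"
      using qfin qB by simp
  qed measurable
  have eqae: "AE t in W. integral\<^sup>L (K t) f = enn2real (p t) - enn2real (q t)"
    using ae by eventually_elim (simp add: real_lebesgue_integral_def p_def q_def)
  show "integrable W (\<lambda>t. integral\<^sup>L (K t) f)"
    by (rule integrable_cong_AE_imp[OF Bochner_Integration.integrable_diff[OF pi qi]])
       (use eqae in \<open>auto simp: eq_commute\<close>)
  have ip: "(\<integral>t. enn2real (p t) \<partial>W) = enn2real (\<integral>\<^sup>+t. p t \<partial>W)"
  proof -
    have "(\<integral>t. enn2real (p t) \<partial>W) = enn2real (\<integral>\<^sup>+t. ennreal (enn2real (p t)) \<partial>W)"
      by (rule integral_eq_nn_integral) auto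
    also have "(\<integral>\<^sup>+t. ennreal (enn2real (p t)) \<partial>W) = (\<integral>\<^sup>+t. p t \<partial>W)"
      by (rule nn_integral_cong_AE) (use pae in \<open>auto simp: ennreal_enn2real_if\<close>)
    finally show ?thesis .
  qed
  have iq: "(\<integral>t. enn2real (q t) \<partial>W) = enn2real (\<integral>\<^sup>+t. q t \<partial>W)"
  proof -
    have "(\<integral>t. enn2real (q t) \<partial>W) = enn2real (\<integral>\<^sup>+t. ennreal (enn2real (q t)) \<partial>W)"
      by (rule integral_eq_nn_integral) auto
    also have "(\<integral>\<^sup>+t. ennreal (enn2real (q t)) \<partial>W) = (\<integral>\<^sup>+t. q t \<partial>W)"
      by (rule nn_integral_cong_AE) (use qae in \<open>auto simp: ennreal_enn2real_if\<close>)
    finally show ?thesis .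
  qed
  have fBi: "integrable (W \<bind> K) f"
    using fin by (auto simp: integrable_iff_bounded)
  have "(\<integral>t. integral\<^sup>L (K t) f \<partial>W) = (\<integral>t. enn2real (p t) - enn2real (q t) \<partial>W)"
    by (rule integral_cong_AE) (use eqae in auto)
  also have "\<dots> = enn2real (\<integral>\<^sup>+t. p t \<partial>W) - enn2real (\<integral>\<^sup>+t. q t \<partial>W)"
    using pi qi ip iq by simp
  also have "\<dots> = integral\<^sup>L (W \<bind> K) f"
    using pB qB real_lebesgue_integral_def[OF fBi] by simp
  finally show "integral\<^sup>L (W \<bind> K) f = (\<integral>t. integral\<^sup>L (K t) f \<partial>W)" ..
qed


lemma ennreal_div_self_le: "(a::ennreal) / a \<le> 1"
proof (cases a)
  case (real r)
  then show ?thesis by (cases "r = 0") (auto simp: divide_ennreal)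
next
  case top
  then show ?thesis by (simp add: ennreal_top_divide)
qed

lemma subprob_uniform_measure:
  assumes "S \<in> sets M" "space M \<noteq> {}"
  shows "subprob_space (uniform_measure M S)"
proof (rule subprob_spaceI)
  show "emeasure (uniform_measure M S) (space (uniform_measure M S)) \<le> 1"
    using assms sets.sets_into_space[OF assms(1)]
    by (simp add: Int_absorb2 ennreal_div_self_le)
qed (use assms in auto)

lemma uniform_measure_cases:
  assumes "S \<in> sets M"
  shows "prob_space (uniform_measure M S) \<or> emeasure (uniform_measure M S) (space (uniform_measure M S)) = 0"
proof (cases "emeasure M S = 0 \<or> emeasure M S = \<infinity>")
  case True
  then show ?thesis using assms sets.sets_into_space[OF assms(1)]
    by (auto simp: Int_absorb2 ennreal_top_divide)
next
  case False
  then show ?thesis using assms by (auto intro!: prob_space_uniform_measure)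
qed

locale slice =
  fixes G :: "'a::euclidean_space set" and \<rho> :: "'a \<Rightarrow> real"
  assumes G_sets[measurable]: "G \<in> sets lebesgue" and \<rho>_pos: "\<And>x. x \<in> G \<Longrightarrow> 0 < \<rho> x"
    and \<rho>_int: "set_integrable lebesgue G \<rho>"
begin

definition "r x = indicator G x * \<rho> x"

lemma r_int: "integrable lebesgue r"
  using \<rho>_int unfolding set_integrable_def r_def[abs_def] by simp

lemma r_meas[measurable]: "r \<in> borel_measurable lebesgue"
  using r_int by (rule borel_measurable_integrable)

lemma r_nonneg: "0 \<le> r x"
  using \<rho>_pos by (auto simp: r_def indicator_def less_imp_le)

lemma r_pos_iff: "0 < r x \<longleftrightarrow> x \<in> G"
  using \<rho>_pos by (auto simp: r_def indicator_def)

lemma r_G: "x \<in> G \<Longrightarrow> r x = \<rho> x"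
  by (simp add: r_def)

definition "Z = (\<integral>x. r x \<partial>lebesgue)"

lemma Z_nonneg: "0 \<le> Z"
  unfolding Z_def using r_nonneg by simp

lemma nn_r: "(\<integral>\<^sup>+x. ennreal (r x) \<partial>lebesgue) = ennreal Z"
  unfolding Z_def by (rule nn_integral_eq_integral[OF r_int]) (simp add: r_nonneg)

lemma set_int_\<rho>: "(LINT y:G|lebesgue. \<rho> y) = Z"
  unfolding Z_def set_lebesgue_integral_def r_def by simp

lemma superlevel_eq: "superlevel G \<rho> t = {x \<in> G. t \<le> r x}"
  by (auto simp: superlevel_def r_def)

lemma superlevel_sets[measurable]: "superlevel G \<rho> t \<in> sets lebesgue"
  unfolding superlevel_eq by measurable

lemma superlevel_pos: "0 < t \<Longrightarrow> superlevel G \<rho> t = {x. t \<le> r x}"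
  unfolding superlevel_eq using r_pos_iff by force

definition "L t = emeasure lebesgue (superlevel G \<rho> t)"

lemma L_fin: assumes "0 < t" shows "L t < \<infinity>"
proof -
  have "L t = (\<integral>\<^sup>+x. indicator (superlevel G \<rho> t) x \<partial>lebesgue)"
    unfolding L_def by simp
  also have "\<dots> \<le> (\<integral>\<^sup>+x. ennreal (r x / t) \<partial>lebesgue)"
    using assms by (intro nn_integral_mono) (auto simp: superlevel_pos[OF assms] indicator_def r_nonneg)
  also have "\<dots> = (\<integral>\<^sup>+x. ennreal (1/t) * ennreal (r x) \<partial>lebesgue)"
    using assms r_nonneg by (intro nn_integral_cong) (simp add: ennreal_mult'[symmetric] divide_inverse mult.commute)
  also have "\<dots> = ennreal (1/t) * ennreal Z"
    by (simp add: nn_integral_cmult nn_r)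
  also have "\<dots> < \<infinity>" by (simp add: ennreal_mult_less_top)
  finally show ?thesis .
qed

lemma level_fun_L: "0 < t \<Longrightarrow> ennreal (level_fun G \<rho> t) = L t"
  using L_fin unfolding level_fun_def L_def
  by (simp add: emeasure_eq_ennreal_measure less_top)

definition "H = {(x,t). 0 < t \<and> t \<le> r x}"

lemma H_sets[measurable]: "H \<in> sets (lebesgue \<Otimes>\<^sub>M lborel)"
proof -
  have "H = {p \<in> space (lebesgue \<Otimes>\<^sub>M lborel). 0 < snd p \<and> snd p \<le> r (fst p)}"
    by (auto simp: H_def space_pair_measure)
  also have "\<dots> \<in> sets (lebesgue \<Otimes>\<^sub>M lborel)" by measurable
  finally show ?thesis .
qed

lemma sec_x: "(\<integral>\<^sup>+t. indicator H (x,t) \<partial>lborel) = ennreal (r x)"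
proof -
  have "(\<integral>\<^sup>+t. indicator H (x,t) \<partial>lborel) = (\<integral>\<^sup>+t. indicator {0<..r x} t \<partial>lborel)"
    by (intro nn_integral_cong) (auto simp: H_def indicator_def)
  also have "\<dots> = emeasure lborel {0<..r x}" by simp
  finally show ?thesis using r_nonneg[of x] by simp
qed

lemma sec_t: "indicator H (x,t) = (indicator {0<..} t * indicator (superlevel G \<rho> t) x :: ennreal)"
  by (auto simp: H_def indicator_def superlevel_pos)

lemma level_meas[measurable]: "(\<lambda>t. L t) \<in> borel_measurable lborel"
proof -
  have S: "{p \<in> space (lborel \<Otimes>\<^sub>M lebesgue). snd p \<in> G \<and> fst p \<le> r (snd p)} \<in> sets (lborel \<Otimes>\<^sub>M (lebesgue :: 'a measure))"
    by measurable
  have "(\<lambda>t. emeasure lebesgue (Pair t -` {p \<in> space (lborel \<Otimes>\<^sub>M lebesgue). snd p \<in> G \<and> fst p \<le> r (snd p)})) \<in> borel_measurable lborel"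
    by (rule lebesgue_sf.measurable_emeasure_Pair[OF S])
  moreover have seteq: "\<And>t. Pair t -` {p \<in> space (lborel \<Otimes>\<^sub>M lebesgue). snd p \<in> G \<and> fst p \<le> r (snd p)} = superlevel G \<rho> t"
    by (auto simp: superlevel_eq space_pair_measure)
  ultimately show ?thesis unfolding L_def by (simp only: seteq)
qed

lemma Zmu_nn: "(\<integral>\<^sup>+t. indicator {0<..} t * L t \<partial>lborel) = ennreal Z"
proof -
  have "(\<integral>\<^sup>+t. indicator {0<..} t * L t \<partial>lborel) = (\<integral>\<^sup>+t. \<integral>\<^sup>+x. indicator H (x,t) \<partial>lebesgue \<partial>lborel)"
    by (intro nn_integral_cong) (simp add: sec_t L_def nn_integral_cmult)
  also have "\<dots> = (\<integral>\<^sup>+x. \<integral>\<^sup>+t. indicator H (x,t) \<partial>lborel \<partial>lebesgue)"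
    by (rule leb_lborel.Fubini') measurable
  also have "\<dots> = ennreal Z" by (simp add: sec_x nn_r)
  finally show ?thesis .
qed

lemma level_fun_meas[measurable]: "(\<lambda>t. level_fun G \<rho> t) \<in> borel_measurable lborel"
  unfolding level_fun_def measure_def L_def[symmetric] by measurable

lemma Zmu: "(LINT t:{0<..}|lborel. level_fun G \<rho> t) = Z"
proof -
  have "(LINT t:{0<..}|lborel. level_fun G \<rho> t) = enn2real (\<integral>\<^sup>+t. ennreal (indicator {0<..} t * level_fun G \<rho> t) \<partial>lborel)"
    unfolding set_lebesgue_integral_def
    by (subst integral_eq_nn_integral) (auto simp: level_fun_def[of G \<rho>, symmetric] intro!: AE_I2 mult_nonneg_nonneg, simp add: level_fun_def)
  also have "(\<integral>\<^sup>+t. ennreal (indicator {0<..} t * level_fun G \<rho> t) \<partial>lborel) = (\<integral>\<^sup>+t. indicator {0<..} t * L t \<partial>lborel)"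
    by (intro nn_integral_cong) (auto simp: indicator_def level_fun_L)
  finally show ?thesis using Zmu_nn Z_nonneg by simp
qed

end


lemma ennreal_cancel_div: "a \<noteq> 0 \<Longrightarrow> a \<noteq> \<top> \<Longrightarrow> (a::ennreal) * (b / a) = b"
  by (simp add: ennreal_times_divide mult.commute[of a] ennreal_mult_divide_eq)

context slice
begin

definition "V x = uniform_measure lborel {0..r x}"
definition "U t = unif_level G \<rho> t"

lemma U_def': "U t = uniform_measure lebesgue (superlevel G \<rho> t)"
  by (simp add: U_def unif_level_def)

lemma sets_V[simp, measurable_cong]: "sets (V x) = sets borel"
  by (simp add: V_def)
lemma space_V[simp]: "space (V x) = UNIV"
  by (simp add: V_def)
lemma sets_U[simp, measurable_cong]: "sets (U t) = sets lebesgue"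
  by (simp add: U_def')
lemma space_U[simp]: "space (U t) = UNIV"
  by (simp add: U_def')

lemma emeasure_interval_r: "emeasure lborel {0..r x} = ennreal (r x)"
  using r_nonneg[of x] by simp

lemma V_cases: "prob_space (V x) \<or> emeasure (V x) (space (V x)) = 0"
  unfolding V_def by (rule uniform_measure_cases) simp

lemma U_cases: "prob_space (U t) \<or> emeasure (U t) (space (U t)) = 0"
  unfolding U_def' by (rule uniform_measure_cases) simp

lemma V_prob: "x \<in> G \<Longrightarrow> prob_space (V x)"
  unfolding V_def using r_pos_iff[of x] by (intro prob_space_uniform_measure) (auto simp: emeasure_interval_r)

lemma U_prob: "0 < t \<Longrightarrow> L t \<noteq> 0 \<Longrightarrow> prob_space (U t)"
  unfolding U_def' using L_fin[of t] by (intro prob_space_uniform_measure) (auto simp: L_def)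

lemma V_meas[measurable]: "V \<in> lebesgue \<rightarrow>\<^sub>M subprob_algebra lborel"
proof (rule measurable_subprob_algebra)
  fix x show "subprob_space (V x)" unfolding V_def by (rule subprob_uniform_measure) auto
next
  fix x show "sets (V x) = sets lborel" by simp
next
  fix A :: "real set" assume A[measurable]: "A \<in> sets lborel"
  define Q where "Q = {p \<in> space (lebesgue \<Otimes>\<^sub>M lborel). 0 \<le> snd p \<and> snd p \<le> r (fst p) \<and> snd p \<in> A}"
  have Q: "Q \<in> sets ((lebesgue :: 'a measure) \<Otimes>\<^sub>M lborel)" unfolding Q_def by measurable
  have num: "(\<lambda>x. emeasure lborel (Pair x -` Q)) \<in> borel_measurable lebesgue"
    by (rule lborel.measurable_emeasure_Pair[OF Q])
  have seq: "Pair x -` Q = {0..r x} \<inter> A" for x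
    by (auto simp: Q_def space_pair_measure)
  have "(\<lambda>x. emeasure lborel ({0..r x} \<inter> A) / ennreal (r x)) \<in> borel_measurable lebesgue"
    using num unfolding seq by measurable
  moreover have "emeasure (V x) A = emeasure lborel ({0..r x} \<inter> A) / ennreal (r x)" for x
    unfolding V_def using A by (simp add: emeasure_interval_r)
  ultimately show "(\<lambda>x. emeasure (V x) A) \<in> borel_measurable lebesgue" by simp
qed

lemma U_meas[measurable]: "U \<in> lborel \<rightarrow>\<^sub>M subprob_algebra lebesgue"
proof (rule measurable_subprob_algebra)
  fix t show "subprob_space (U t)" unfolding U_def' by (rule subprob_uniform_measure) auto
next
  fix t show "sets (U t) = sets lebesgue" by simp
next
  fix A :: "'a set" assume A[measurable]: "A \<in> sets lebesgue"
  define Q where "Q = {p \<in> space (lborel \<Otimes>\<^sub>M lebesgue). snd p \<in> G \<and> fst p \<le> r (snd p) \<and> snd p \<in> A}"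
  have Q: "Q \<in> sets (lborel \<Otimes>\<^sub>M (lebesgue :: 'a measure))" unfolding Q_def by measurable
  have num: "(\<lambda>t. emeasure lebesgue (Pair t -` Q)) \<in> borel_measurable lborel"
    by (rule lebesgue_sf.measurable_emeasure_Pair[OF Q])
  have seq: "Pair t -` Q = superlevel G \<rho> t \<inter> A" for t
    by (auto simp: Q_def space_pair_measure superlevel_eq)
  have "(\<lambda>t. emeasure lebesgue (superlevel G \<rho> t \<inter> A) / L t) \<in> borel_measurable lborel"
    using num unfolding seq by measurable
  moreover have "emeasure (U t) A = emeasure lebesgue (superlevel G \<rho> t \<inter> A) / L t" for t
    unfolding U_def' L_def using A by simp
  ultimately show "(\<lambda>t. emeasure (U t) A) \<in> borel_measurable lborel" by simp
qed

lemma nn_V: "g \<in> borel_measurable borel \<Longrightarrow>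
  (\<integral>\<^sup>+t. g t \<partial>V x) = (\<integral>\<^sup>+t. g t * indicator {0..r x} t \<partial>lborel) / ennreal (r x)"
  unfolding V_def by (subst nn_integral_uniform_measure) (auto simp: emeasure_interval_r)

lemma nn_U: "f \<in> borel_measurable lebesgue \<Longrightarrow>
  (\<integral>\<^sup>+x. f x \<partial>U t) = (\<integral>\<^sup>+x. f x * indicator (superlevel G \<rho> t) x \<partial>lebesgue) / L t"
  unfolding U_def' L_def by (subst nn_integral_uniform_measure) auto

definition "M = target G \<rho>"
definition "N = aux_measure G \<rho>"

lemma M_density: "M = density lebesgue (\<lambda>x. ennreal (r x / Z))"
  unfolding M_def target_def set_int_\<rho> r_def by simp

lemma N_density: "N = density lborel (\<lambda>t. ennreal (indicator {0<..} t * level_fun G \<rho> t / Z))"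
  unfolding N_def aux_measure_def Zmu by simp

lemma sets_M[simp, measurable_cong]: "sets M = sets lebesgue" by (simp add: M_density)
lemma space_M[simp]: "space M = UNIV" by (simp add: M_density)
lemma sets_N[simp, measurable_cong]: "sets N = sets borel" by (simp add: N_density)
lemma space_N[simp]: "space N = UNIV" by (simp add: N_density)

lemma nn_M: "f \<in> borel_measurable lebesgue \<Longrightarrow> (\<integral>\<^sup>+x. f x \<partial>M) = (\<integral>\<^sup>+x. ennreal (r x / Z) * f x \<partial>lebesgue)"
  unfolding M_density by (subst nn_integral_density) auto

lemma nn_N: "g \<in> borel_measurable borel \<Longrightarrow>
   (\<integral>\<^sup>+t. g t \<partial>N) = (\<integral>\<^sup>+t. ennreal (indicator {0<..} t * level_fun G \<rho> t / Z) * g t \<partial>lborel)"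
  unfolding N_density by (subst nn_integral_density) auto


lemma h_sec1: "(\<lambda>(x,t). h x t) \<in> borel_measurable ((lebesgue::'a measure) \<Otimes>\<^sub>M lborel) \<Longrightarrow> (\<lambda>t. h x t) \<in> borel_measurable borel"
  using measurable_Pair2[of "\<lambda>(x,t). h x t" lebesgue lborel borel x] by simp

lemma h_sec2: "(\<lambda>(x,t). h x t) \<in> borel_measurable ((lebesgue::'a measure) \<Otimes>\<^sub>M lborel) \<Longrightarrow> (\<lambda>x. h x t) \<in> borel_measurable lebesgue"
  using measurable_Pair1[of "\<lambda>(x,t). h x t" lebesgue lborel borel t] by simp

lemma adj_nn:
  assumes Zp: "0 < Z" and h[measurable]: "(\<lambda>(x,t). h x t) \<in> borel_measurable (lebesgue \<Otimes>\<^sub>M lborel)"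
  shows "(\<integral>\<^sup>+x. (\<integral>\<^sup>+t. h x t \<partial>V x) \<partial>M) = (\<integral>\<^sup>+t. (\<integral>\<^sup>+x. h x t \<partial>U t) \<partial>N)"
proof -
  have hx[measurable]: "(\<lambda>t. h x t) \<in> borel_measurable borel" for x by (rule h_sec1[OF h])
  have ht[measurable]: "(\<lambda>x. h x t) \<in> borel_measurable lebesgue" for t by (rule h_sec2[OF h])
  have hs: "(\<lambda>(t,x). h x t) \<in> borel_measurable (lborel \<Otimes>\<^sub>M (lebesgue::'a measure))"
    using measurable_pair_swap[OF h] by simp
  have mV: "(\<lambda>x. \<integral>\<^sup>+t. h x t \<partial>V x) \<in> borel_measurable lebesgue"
    by (rule nn_integral_measurable_subprob_algebra2[OF h V_meas])
  have mU: "(\<lambda>t. \<integral>\<^sup>+x. h x t \<partial>U t) \<in> borel_measurable lborel"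
    by (rule nn_integral_measurable_subprob_algebra2[OF hs U_meas])
  have "(\<integral>\<^sup>+x. (\<integral>\<^sup>+t. h x t \<partial>V x) \<partial>M) = (\<integral>\<^sup>+x. ennreal (r x / Z) * (\<integral>\<^sup>+t. h x t \<partial>V x) \<partial>lebesgue)"
    by (rule nn_M[OF mV])
  also have "\<dots> = (\<integral>\<^sup>+x. ennreal (1/Z) * (\<integral>\<^sup>+t. h x t * indicator H (x,t) \<partial>lborel) \<partial>lebesgue)"
  proof (rule nn_integral_cong)
    fix x :: 'a
    show "ennreal (r x / Z) * (\<integral>\<^sup>+t. h x t \<partial>V x) = ennreal (1/Z) * (\<integral>\<^sup>+t. h x t * indicator H (x,t) \<partial>lborel)"
    proof (cases "0 < r x")
      case False
      then have "r x = 0" using r_nonneg[of x] by simp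
      moreover have "indicator H (x,t) = (0::ennreal)" for t using \<open>r x = 0\<close> by (auto simp: H_def)
      ultimately show ?thesis by simp
    next
      case True
      have "(\<integral>\<^sup>+t. h x t * indicator {0..r x} t \<partial>lborel) = (\<integral>\<^sup>+t. h x t * indicator H (x,t) \<partial>lborel)"
        by (rule nn_integral_cong_AE) (use AE_lborel_singleton[of 0] in \<open>eventually_elim, auto simp: H_def indicator_def\<close>)
      moreover have "ennreal (r x / Z) = ennreal (1/Z) * ennreal (r x)"
        using True Zp by (simp add: ennreal_mult'[symmetric])
      ultimately show ?thesis using True
        by (simp add: nn_V ennreal_cancel_div mult.assoc)
    qed
  qed
  also have "\<dots> = ennreal (1/Z) * (\<integral>\<^sup>+x. \<integral>\<^sup>+t. h x t * indicator H (x,t) \<partial>lborel \<partial>lebesgue)"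
    by (rule nn_integral_cmult) measurable
  also have "(\<integral>\<^sup>+x. \<integral>\<^sup>+t. h x t * indicator H (x,t) \<partial>lborel \<partial>lebesgue) = (\<integral>\<^sup>+t. \<integral>\<^sup>+x. h x t * indicator H (x,t) \<partial>lebesgue \<partial>lborel)"
    by (rule leb_lborel.Fubini'[symmetric]) measurable
  also have "ennreal (1/Z) * \<dots> = (\<integral>\<^sup>+t. ennreal (1/Z) * (\<integral>\<^sup>+x. h x t * indicator H (x,t) \<partial>lebesgue) \<partial>lborel)"
    by (rule nn_integral_cmult[symmetric]) measurable
  also have "\<dots> = (\<integral>\<^sup>+t. ennreal (indicator {0<..} t * level_fun G \<rho> t / Z) * (\<integral>\<^sup>+x. h x t \<partial>U t) \<partial>lborel)"
  proof (rule nn_integral_cong)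
    fix t :: real
    show "ennreal (1/Z) * (\<integral>\<^sup>+x. h x t * indicator H (x,t) \<partial>lebesgue) = ennreal (indicator {0<..} t * level_fun G \<rho> t / Z) * (\<integral>\<^sup>+x. h x t \<partial>U t)"
    proof (cases "0 < t")
      case False
      then have "indicator H (x,t) = (0::ennreal)" for x by (auto simp: H_def)
      then show ?thesis using False by simp
    next
      case True
      have eqi: "(\<integral>\<^sup>+x. h x t * indicator H (x,t) \<partial>lebesgue) = (\<integral>\<^sup>+x. h x t * indicator (superlevel G \<rho> t) x \<partial>lebesgue)"
        using True by (intro nn_integral_cong) (simp add: sec_t)
      have e2: "ennreal (level_fun G \<rho> t / Z) = ennreal (1/Z) * L t"
      proof -
        have "ennreal (level_fun G \<rho> t / Z) = ennreal ((1/Z) * level_fun G \<rho> t)" by simp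
        also have "\<dots> = ennreal (1/Z) * ennreal (level_fun G \<rho> t)"
          by (rule ennreal_mult) (use Zp in \<open>auto simp: level_fun_def\<close>)
        finally have "ennreal (level_fun G \<rho> t / Z) = ennreal (1/Z) * ennreal (level_fun G \<rho> t)" .
        then show ?thesis using level_fun_L[OF True] by simp
      qed
      show ?thesis
      proof (cases "L t = 0")
        case True
        have "superlevel G \<rho> t \<in> null_sets lebesgue" using True by (simp add: L_def null_sets_def)
        then have "(\<integral>\<^sup>+x. h x t * indicator (superlevel G \<rho> t) x \<partial>lebesgue) = 0"
          by (rule nn_integral_null_set)
        then show ?thesis using eqi e2 True \<open>0 < t\<close> by simp
      next
        case False
        then show ?thesis using \<open>0 < t\<close> eqi e2 L_fin[OF \<open>0 < t\<close>]
          by (simp add: nn_U mult.assoc ennreal_cancel_div)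
      qed
    qed
  qed
  also have "\<dots> = (\<integral>\<^sup>+t. (\<integral>\<^sup>+x. h x t \<partial>U t) \<partial>N)"
    by (rule nn_N[symmetric]) (use mU in simp)
  finally show ?thesis .
qed

end


context slice
begin

lemma subprob_V: "subprob_space (V x)"
  unfolding V_def by (rule subprob_uniform_measure) auto

lemma subprob_U: "subprob_space (U t)"
  unfolding U_def' by (rule subprob_uniform_measure) auto

lemma V_meas'[measurable]: "V \<in> M \<rightarrow>\<^sub>M subprob_algebra lborel"
  using V_meas by (simp cong: measurable_cong_sets)

lemma U_meas'[measurable]: "U \<in> N \<rightarrow>\<^sub>M subprob_algebra lebesgue"
  using U_meas by (simp cong: measurable_cong_sets)

lemma U_meas_V[measurable]: "U \<in> V x \<rightarrow>\<^sub>M subprob_algebra lebesgue"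
  using U_meas by (simp cong: measurable_cong_sets)

lemma V_meas_U[measurable]: "V \<in> U t \<rightarrow>\<^sub>M subprob_algebra lborel"
  using V_meas by (simp cong: measurable_cong_sets)

lemma sets_VU[simp]: "sets (V x \<bind> U) = sets lebesgue"
  by (rule sets_bind) auto

lemma sets_UV[simp]: "sets (U t \<bind> V) = sets borel"
  by (rule sets_bind) auto

lemma space_VU[simp]: "space (V x \<bind> U) = UNIV"
  using sets_eq_imp_space_eq[OF sets_VU[of x]] by simp

lemma space_UV[simp]: "space (U t \<bind> V) = UNIV"
  using sets_eq_imp_space_eq[OF sets_UV[of t]] by simp

lemma slice_kernel_eq:
  assumes x: "x \<in> G"
  shows "slice_kernel G \<rho> x = V x \<bind> U"
proof -
  have rx: "r x = \<rho> x" "0 < r x" using x r_G[OF x] \<rho>_pos[OF x] by auto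
  have "slice_kernel G \<rho> x = measure_of UNIV (sets (V x \<bind> U))
     (\<lambda>A. ennreal ((1 / \<rho> x) * (LINT t:{0..\<rho> x}|lborel. measure (unif_level G \<rho> t) A)))"
    by (simp add: slice_kernel_def)
  also have "\<dots> = V x \<bind> U"
  proof (rule measure_of_eq_measure)
    fix A assume A: "A \<in> sets (V x \<bind> U)"
    then have A'[measurable]: "A \<in> sets lebesgue" by simp
    have mU: "(\<lambda>t. emeasure (U t) A) \<in> borel_measurable borel"
      using measurable_emeasure_kernel[OF U_meas A'] by simp
    have mU2: "(\<lambda>t. measure (U t) A) \<in> borel_measurable borel"
      unfolding measure_def using mU by measurable
    have le1: "measure (U t) A \<le> 1" for t
      using subprob_space.subprob_measure_le_1[OF subprob_U] .
    have eqm: "emeasure (U t) A = ennreal (measure (U t) A)" for t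
      using subprob_space.emeasure_subprob_space_less_top[OF subprob_U, of t A]
      by (simp add: emeasure_eq_ennreal_measure less_top)
    have int: "integrable lborel (\<lambda>t. indicator {0..r x} t * measure (U t) A)"
    proof (rule Bochner_Integration.integrable_bound[of _ "indicator {0..r x}"])
      show "integrable lborel (indicator {0..r x} :: real \<Rightarrow> real)"
        by (rule integrable_real_indicator) (auto simp: emeasure_interval_r)
      show "(\<lambda>t. indicator {0..r x} t * measure (U t) A) \<in> borel_measurable lborel"
        using mU2 by simp
      show "AE t in lborel. norm (indicator {0..r x} t * measure (U t) A) \<le> norm (indicator {0..r x} t :: real)"
        using le1 by (auto simp: indicator_def)
    qed
    have "emeasure (V x \<bind> U) A = (\<integral>\<^sup>+t. emeasure (U t) A \<partial>V x)"
      by (rule emeasure_bind[OF _ U_meas_V A']) simp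
    also have "\<dots> = (\<integral>\<^sup>+t. emeasure (U t) A * indicator {0..r x} t \<partial>lborel) / ennreal (r x)"
      by (rule nn_V[OF mU])
    also have "(\<integral>\<^sup>+t. emeasure (U t) A * indicator {0..r x} t \<partial>lborel) = (\<integral>\<^sup>+t. ennreal (indicator {0..r x} t * measure (U t) A) \<partial>lborel)"
      by (intro nn_integral_cong) (auto simp: eqm indicator_def)
    also have "\<dots> = ennreal (\<integral>t. indicator {0..r x} t * measure (U t) A \<partial>lborel)"
      by (rule nn_integral_eq_integral[OF int]) auto
    also have "ennreal (\<integral>t. indicator {0..r x} t * measure (U t) A \<partial>lborel) / ennreal (r x)
       = ennreal ((1 / \<rho> x) * (LINT t:{0..\<rho> x}|lborel. measure (unif_level G \<rho> t) A))"
      using rx by (subst divide_ennreal) (auto simp: set_lebesgue_integral_def U_def intro!: integral_nonneg)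
    finally show "ennreal ((1 / \<rho> x) * (LINT t:{0..\<rho> x}|lborel. measure (unif_level G \<rho> t) A)) = emeasure (V x \<bind> U) A"
      by simp
  qed simp
  finally show ?thesis .
qed

lemma Q_kernel_eq:
  assumes t: "0 < t"
  shows "Q_kernel G \<rho> t = U t \<bind> V"
proof -
  have "Q_kernel G \<rho> t = measure_of UNIV (sets (U t \<bind> V)) (\<lambda>B. ennreal (Q_fun G \<rho> t B))"
    by (simp add: Q_kernel_def)
  also have "\<dots> = U t \<bind> V"
  proof (rule measure_of_eq_measure)
    fix B assume B: "B \<in> sets (U t \<bind> V)"
    then have B'[measurable]: "B \<in> sets borel" by simp
    define S where "S = superlevel G \<rho> t"
    have mV: "(\<lambda>x. emeasure (V x) B) \<in> borel_measurable lebesgue"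
      using measurable_emeasure_kernel[OF V_meas, of B] by simp
    have mV2[measurable]: "(\<lambda>x. measure (V x) B) \<in> borel_measurable lebesgue"
      unfolding measure_def using mV by measurable
    have le1: "measure (V x) B \<le> 1" for x
      using subprob_space.subprob_measure_le_1[OF subprob_V] .
    have eqm: "emeasure (V x) B = ennreal (measure (V x) B)" for x
      using subprob_space.emeasure_subprob_space_less_top[OF subprob_V, of x B]
      by (simp add: emeasure_eq_ennreal_measure less_top)
    have SG: "S \<subseteq> G" by (auto simp: S_def superlevel_def)
    have mG: "x \<in> G \<Longrightarrow> measure (V x) B = measure lborel (B \<inter> {0..\<rho> x}) / \<rho> x" for x
      using r_pos_iff[of x] r_G[of x] unfolding V_def
      by (subst measure_uniform_measure) (auto simp: emeasure_interval_r Int_commute)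
    have Sfin: "emeasure lebesgue S < \<infinity>" using L_fin[OF t] by (simp add: L_def S_def)
    have int: "integrable lebesgue (\<lambda>x. indicator S x * measure (V x) B)"
    proof (rule Bochner_Integration.integrable_bound[of _ "indicator S"])
      show "integrable lebesgue (indicator S :: 'a \<Rightarrow> real)"
        by (rule integrable_real_indicator) (use Sfin in \<open>auto simp: S_def\<close>)
      show "(\<lambda>x. indicator S x * measure (V x) B) \<in> borel_measurable lebesgue"
        unfolding S_def by measurable
      show "AE x in lebesgue. norm (indicator S x * measure (V x) B) \<le> norm (indicator S x :: real)"
        using le1 by (auto simp: indicator_def)
    qed
    have "emeasure (U t \<bind> V) B = (\<integral>\<^sup>+x. emeasure (V x) B \<partial>U t)"
      by (rule emeasure_bind[OF _ V_meas_U]) (use B' in simp_all)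
    also have "\<dots> = (\<integral>\<^sup>+x. emeasure (V x) B * indicator S x \<partial>lebesgue) / L t"
      unfolding S_def by (rule nn_U[OF mV])
    also have "(\<integral>\<^sup>+x. emeasure (V x) B * indicator S x \<partial>lebesgue) = (\<integral>\<^sup>+x. ennreal (indicator S x * measure (V x) B) \<partial>lebesgue)"
      by (intro nn_integral_cong) (auto simp: eqm indicator_def)
    also have "\<dots> = ennreal (\<integral>x. indicator S x * measure (V x) B \<partial>lebesgue)"
      by (rule nn_integral_eq_integral[OF int]) auto
    also have "ennreal (\<integral>x. indicator S x * measure (V x) B \<partial>lebesgue) / L t
        = ennreal ((1 / measure lebesgue S) * (\<integral>x. indicator S x * measure (V x) B \<partial>lebesgue))"
    proof (cases "L t = 0")
      case True
      then have Sn: "S \<in> null_sets lebesgue" by (simp add: S_def L_def null_sets_def)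
      have "(\<integral>x. indicator S x * measure (V x) B \<partial>lebesgue) = 0"
        by (rule integral_eq_zero_AE) (use AE_not_in[OF Sn] in \<open>eventually_elim, simp\<close>)
      then show ?thesis by simp
    next
      case False
      have Lt: "L t = ennreal (measure lebesgue S)"
        using L_fin[OF t] by (simp add: L_def S_def emeasure_eq_ennreal_measure less_top)
      then have mpos: "0 < measure lebesgue S" using False by (simp add: zero_less_measure_iff)
      have J0: "0 \<le> (\<integral>x. indicator S x * measure (V x) B \<partial>lebesgue)"
        by (rule Bochner_Integration.integral_nonneg) simp
      show ?thesis unfolding Lt using mpos J0 by (subst divide_ennreal) auto
    qed
    also have "(\<integral>x. indicator S x * measure (V x) B \<partial>lebesgue) = (LINT x:S|lebesgue. measure lborel (B \<inter> {0..\<rho> x}) / \<rho> x)"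
      unfolding set_lebesgue_integral_def
      by (intro Bochner_Integration.integral_cong) (use SG mG in \<open>auto simp: indicator_def\<close>)
    finally show "ennreal (Q_fun G \<rho> t B) = emeasure (U t \<bind> V) B" by (simp add: Q_fun_def S_def)
  qed simp
  finally show ?thesis .
qed

end


lemma phi_meas:
  assumes B[measurable]: "B \<in> sets borel"
  shows "(\<lambda>s. measure lborel (B \<inter> {0..s}) / s) \<in> borel_measurable borel"
proof -
  have "mono (\<lambda>s. measure lborel (B \<inter> {0..s}))"
  proof (rule monoI)
    fix s s' :: real assume "s \<le> s'"
    show "measure lborel (B \<inter> {0..s}) \<le> measure lborel (B \<inter> {0..s'})"
    proof (rule measure_mono_fmeasurable)
      show "B \<inter> {0..s} \<subseteq> B \<inter> {0..s'}" using \<open>s \<le> s'\<close> by auto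
      show "B \<inter> {0..s} \<in> sets lborel" by simp
      show "B \<inter> {0..s'} \<in> fmeasurable lborel"
        by (rule fmeasurableI2[of "{0..s'}"]) (auto simp del: atLeastAtMost_iff, metis cbox_interval fmeasurable_cbox)
    qed
  qed
  then have "(\<lambda>s. measure lborel (B \<inter> {0..s})) \<in> borel_measurable borel"
    by (rule borel_measurable_mono)
  then show ?thesis by measurable
qed

context slice
begin

definition "D t = distr (restrict_space lebesgue (superlevel G \<rho> t)) borel r"

lemma int_D:
  fixes \<phi> :: "real \<Rightarrow> real"
  assumes phi[measurable]: "\<phi> \<in> borel_measurable borel"
  shows "(LINT x:superlevel G \<rho> t|lebesgue. \<phi> (\<rho> x)) = (\<integral>s. \<phi> s \<partial>D t)"
proof -
  have "(LINT x:superlevel G \<rho> t|lebesgue. \<phi> (\<rho> x)) = (LINT x:superlevel G \<rho> t|lebesgue. \<phi> (r x))"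
    unfolding set_lebesgue_integral_def
    by (intro Bochner_Integration.integral_cong) (auto simp: indicator_def superlevel_def r_def)
  also have "\<dots> = integral\<^sup>L (restrict_space lebesgue (superlevel G \<rho> t)) (\<lambda>x. \<phi> (r x))"
    unfolding set_lebesgue_integral_def using integral_restrict_space[of "superlevel G \<rho> t" lebesgue "\<lambda>x. \<phi> (r x)"] by simp
  also have "\<dots> = (\<integral>s. \<phi> s \<partial>D t)"
    unfolding D_def by (subst integral_distr) (auto intro: measurable_restrict_space1)
  finally show ?thesis .
qed

lemma sets_D[simp]: "sets (D t) = sets borel" by (simp add: D_def)

lemma emeasure_D:
  assumes t: "0 < t"
  shows "emeasure (D t) {a<..} = (if a < t then L t else (SUP n. L (a + 1 / Suc n)))"
proof -
  have "emeasure (D t) {a<..} = emeasure (restrict_space lebesgue (superlevel G \<rho> t)) (r -` {a<..} \<inter> superlevel G \<rho> t)"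
    unfolding D_def by (subst emeasure_distr) (auto intro: measurable_restrict_space1)
  also have "\<dots> = emeasure lebesgue (r -` {a<..} \<inter> superlevel G \<rho> t)"
    by (rule emeasure_restrict_space) auto
  also have "\<dots> = (if a < t then L t else (SUP n. L (a + 1 / Suc n)))"
  proof (cases "a < t")
    case True
    then have "r -` {a<..} \<inter> superlevel G \<rho> t = superlevel G \<rho> t"
      by (auto simp: superlevel_eq)
    then show ?thesis using True by (simp add: L_def)
  next
    case False
    have eq: "r -` {a<..} \<inter> superlevel G \<rho> t = (\<Union>n. superlevel G \<rho> (a + 1 / Suc n))"
    proof (intro equalityI subsetI)
      fix x assume x: "x \<in> r -` {a<..} \<inter> superlevel G \<rho> t"
      then have "a < r x" "x \<in> G" by (auto simp: superlevel_eq)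
      then obtain n where "1 / Suc n < r x - a"
        by (metis diff_gt_0_iff_gt nat_approx_posE)
      then have "a + 1 / Suc n \<le> r x" by simp
      then have "x \<in> superlevel G \<rho> (a + 1 / Suc n)" using \<open>x \<in> G\<close> by (simp add: superlevel_eq)
      then show "x \<in> (\<Union>n. superlevel G \<rho> (a + 1 / Suc n))" by blast
    next
      fix x assume "x \<in> (\<Union>n. superlevel G \<rho> (a + 1 / Suc n))"
      then obtain n where "x \<in> superlevel G \<rho> (a + 1 / Suc n)" by auto
      then have xs: "x \<in> G" "a + 1/Suc n \<le> r x" by (auto simp: superlevel_eq)
      have "0 < 1/real(Suc n)" by simp
      then have "a < r x" "t \<le> r x" using xs False by linarith+
      then show "x \<in> r -` {a<..} \<inter> superlevel G \<rho> t" using xs by (simp add: superlevel_eq)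
    qed
    have inc: "incseq (\<lambda>n. superlevel G \<rho> (a + 1 / Suc n))"
    proof (rule incseq_SucI)
      fix n
      have "1 / real (Suc (Suc n)) \<le> 1 / real (Suc n)" by (simp add: frac_le)
      then show "superlevel G \<rho> (a + 1 / Suc n) \<subseteq> superlevel G \<rho> (a + 1 / Suc (Suc n))"
        by (auto simp: superlevel_def)
    qed
    have "emeasure lebesgue (\<Union>n. superlevel G \<rho> (a + 1 / Suc n)) = (SUP n. L (a + 1 / Suc n))"
      unfolding L_def by (rule SUP_emeasure_incseq[symmetric]) (use inc in auto)
    then show ?thesis using False eq by simp
  qed
  finally show ?thesis .
qed

lemma D_fin:
  assumes t: "0 < t"
  shows "emeasure (D t) {a<..} < \<infinity>"
proof -
  have "emeasure (D t) {a<..} \<le> emeasure (D t) (space (D t))"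
    by (rule emeasure_space)
  also have "\<dots> = emeasure lebesgue (superlevel G \<rho> t)"
    unfolding D_def
    by (subst emeasure_distr) (auto intro: measurable_restrict_space1 simp: emeasure_restrict_space)
  also have "\<dots> < \<infinity>" using L_fin[OF t] by (simp add: L_def)
  finally show ?thesis .
qed

end

lemma Q_fun_eq:
  assumes S1: "slice G \<rho>" and S2: "slice G' \<rho>'"
    and lv: "\<forall>t>0. level_fun G \<rho> t = level_fun G' \<rho>' t"
    and t: "0 < t" and B: "B \<in> sets borel"
  shows "Q_fun G \<rho> t B = Q_fun G' \<rho>' t B"
proof -
  interpret A: slice G \<rho> by (rule S1)
  interpret B: slice G' \<rho>' by (rule S2)
  have LL: "0 < s \<Longrightarrow> A.L s = B.L s" for s
    using A.level_fun_L[of s] B.level_fun_L[of s] lv by auto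
  have DD: "A.D t = B.D t"
  proof (rule measure_eqI_lessThan)
    fix a
    show "emeasure (A.D t) {a<..} < \<infinity>" by (rule A.D_fin[OF t])
    have pos: "0 < a + 1 / real (Suc n)" if "\<not> a < t" for n
      using that t by (smt (verit) divide_pos_pos of_nat_0_less_iff zero_less_Suc)
    show "emeasure (A.D t) {a<..} = emeasure (B.D t) {a<..}"
      unfolding A.emeasure_D[OF t] B.emeasure_D[OF t] using LL[OF t] LL pos by auto
  qed auto
  have phi: "(\<lambda>s. measure lborel (B \<inter> {0..s}) / s) \<in> borel_measurable borel"
    by (rule phi_meas[OF B])
  show ?thesis
    unfolding Q_fun_def A.int_D[OF phi] B.int_D[OF phi] DD
    using lv t by (simp add: level_fun_def)
qed

lemma aux_measure_eq:
  assumes lv: "\<forall>t>0. level_fun G \<rho> t = level_fun G' \<rho>' t"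
  shows "aux_measure G \<rho> = aux_measure G' \<rho>'"
proof -
  have I: "(LINT r:{0<..}|lborel. level_fun G \<rho> r) = (LINT r:{0<..}|lborel. level_fun G' \<rho>' r)"
    by (rule set_lebesgue_integral_cong) (use lv in auto)
  have F: "(\<lambda>t. ennreal (indicator {0<..} t * level_fun G \<rho> t / (LINT r:{0<..}|lborel. level_fun G' \<rho>' r)))
     = (\<lambda>t. ennreal (indicator {0<..} t * level_fun G' \<rho>' t / (LINT r:{0<..}|lborel. level_fun G' \<rho>' r)))"
    by (rule ext) (use lv in \<open>auto simp: indicator_def\<close>)
  show ?thesis unfolding aux_measure_def I F ..
qed


lemma iter_signed:
  fixes F :: "'a \<Rightarrow> 'b \<Rightarrow> real"
  assumes sK: "\<And>t. sets (K t) = sets Nb"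
   and Fm: "\<And>t. F t \<in> borel_measurable Nb"
   and pm: "(\<lambda>t. \<integral>\<^sup>+x. ennreal (F t x) \<partial>K t) \<in> borel_measurable W"
   and qm: "(\<lambda>t. \<integral>\<^sup>+x. ennreal (- F t x) \<partial>K t) \<in> borel_measurable W"
   and im: "(\<lambda>t. \<integral>x. F t x \<partial>K t) \<in> borel_measurable W"
   and fin: "(\<integral>\<^sup>+t. \<integral>\<^sup>+x. ennreal \<bar>F t x\<bar> \<partial>K t \<partial>W) < \<infinity>"
  shows "AE t in W. integrable (K t) (F t)"
    and "integrable W (\<lambda>t. \<integral>x. F t x \<partial>K t)"
    and "(\<integral>t. \<integral>x. F t x \<partial>K t \<partial>W) = enn2real (\<integral>\<^sup>+t. \<integral>\<^sup>+x. ennreal (F t x) \<partial>K t \<partial>W) - enn2real (\<integral>\<^sup>+t. \<integral>\<^sup>+x. ennreal (- F t x) \<partial>K t \<partial>W)"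
proof -
  have FK: "F t \<in> borel_measurable (K t)" for t
    using Fm[of t] sK[of t] by (simp cong: measurable_cong_sets)
  define p where "p t = (\<integral>\<^sup>+x. ennreal (F t x) \<partial>K t)" for t
  define q where "q t = (\<integral>\<^sup>+x. ennreal (- F t x) \<partial>K t)" for t
  define a where "a t = (\<integral>\<^sup>+x. ennreal \<bar>F t x\<bar> \<partial>K t)" for t
  have pm'[measurable]: "p \<in> borel_measurable W" using pm unfolding p_def .
  have qm'[measurable]: "q \<in> borel_measurable W" using qm unfolding q_def .
  have pa: "p t \<le> a t" for t unfolding p_def a_def by (intro nn_integral_mono ennreal_leI) auto
  have qa: "q t \<le> a t" for t unfolding q_def a_def by (intro nn_integral_mono ennreal_leI) auto
  have pfin: "(\<integral>\<^sup>+t. p t \<partial>W) < \<infinity>"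
    using fin by (intro le_less_trans[OF nn_integral_mono[OF pa]]) (simp add: a_def)
  have qfin: "(\<integral>\<^sup>+t. q t \<partial>W) < \<infinity>"
    using fin by (intro le_less_trans[OF nn_integral_mono[OF qa]]) (simp add: a_def)
  have pae: "AE t in W. p t \<noteq> \<infinity>" using pfin by (intro nn_integral_PInf_AE) auto
  have qae: "AE t in W. q t \<noteq> \<infinity>" using qfin by (intro nn_integral_PInf_AE) auto
  show ae: "AE t in W. integrable (K t) (F t)"
    using pae qae
  proof eventually_elim
    case (elim t)
    have m1: "(\<lambda>x. ennreal (F t x)) \<in> borel_measurable (K t)" using FK[of t] by measurable
    have m2: "(\<lambda>x. ennreal (- F t x)) \<in> borel_measurable (K t)" using FK[of t] by measurable
    have sp: "ennreal \<bar>y\<bar> = ennreal y + ennreal (- y)" for y :: real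
      by (cases "0 \<le> y") (auto simp: ennreal_neg)
    have "a t = (\<integral>\<^sup>+x. ennreal (F t x) + ennreal (- F t x) \<partial>K t)"
      unfolding a_def by (intro nn_integral_cong) (rule sp)
    also have "\<dots> = p t + q t"
      unfolding p_def q_def by (rule nn_integral_add[OF m1 m2])
    finally have "a t = p t + q t" .
    then have "a t < \<infinity>" using elim by (simp add: less_top)
    then show ?case by (auto simp: integrable_iff_bounded FK a_def)
  qed
  have pi: "integrable W (\<lambda>t. enn2real (p t))"
  proof (rule integrableI_bounded)
    have "(\<integral>\<^sup>+t. ennreal (norm (enn2real (p t))) \<partial>W) \<le> (\<integral>\<^sup>+t. p t \<partial>W)"
      by (rule nn_integral_mono) (simp add: enn2real_le_self)
    then show "(\<integral>\<^sup>+t. ennreal (norm (enn2real (p t))) \<partial>W) < \<infinity>" using pfin by simp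
  qed measurable
  have qi: "integrable W (\<lambda>t. enn2real (q t))"
  proof (rule integrableI_bounded)
    have "(\<integral>\<^sup>+t. ennreal (norm (enn2real (q t))) \<partial>W) \<le> (\<integral>\<^sup>+t. q t \<partial>W)"
      by (rule nn_integral_mono) (simp add: enn2real_le_self)
    then show "(\<integral>\<^sup>+t. ennreal (norm (enn2real (q t))) \<partial>W) < \<infinity>" using qfin by simp
  qed measurable
  have eqae: "AE t in W. (\<integral>x. F t x \<partial>K t) = enn2real (p t) - enn2real (q t)"
    using ae by eventually_elim (simp add: real_lebesgue_integral_def p_def q_def)
  show "integrable W (\<lambda>t. \<integral>x. F t x \<partial>K t)"
    by (rule integrable_cong_AE_imp[OF Bochner_Integration.integrable_diff[OF pi qi] im])
       (use eqae in \<open>auto simp: eq_commute\<close>)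
  have ip: "(\<integral>t. enn2real (p t) \<partial>W) = enn2real (\<integral>\<^sup>+t. p t \<partial>W)"
  proof -
    have "(\<integral>t. enn2real (p t) \<partial>W) = enn2real (\<integral>\<^sup>+t. ennreal (enn2real (p t)) \<partial>W)"
      by (rule integral_eq_nn_integral) auto
    also have "(\<integral>\<^sup>+t. ennreal (enn2real (p t)) \<partial>W) = (\<integral>\<^sup>+t. p t \<partial>W)"
      by (rule nn_integral_cong_AE) (use pae in \<open>auto simp: ennreal_enn2real_if\<close>)
    finally show ?thesis .
  qed
  have iq: "(\<integral>t. enn2real (q t) \<partial>W) = enn2real (\<integral>\<^sup>+t. q t \<partial>W)"
  proof -
    have "(\<integral>t. enn2real (q t) \<partial>W) = enn2real (\<integral>\<^sup>+t. ennreal (enn2real (q t)) \<partial>W)"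
      by (rule integral_eq_nn_integral) auto
    also have "(\<integral>\<^sup>+t. ennreal (enn2real (q t)) \<partial>W) = (\<integral>\<^sup>+t. q t \<partial>W)"
      by (rule nn_integral_cong_AE) (use qae in \<open>auto simp: ennreal_enn2real_if\<close>)
    finally show ?thesis .
  qed
  have "(\<integral>t. \<integral>x. F t x \<partial>K t \<partial>W) = (\<integral>t. enn2real (p t) - enn2real (q t) \<partial>W)"
    by (rule integral_cong_AE) (use eqae im in auto)
  also have "\<dots> = enn2real (\<integral>\<^sup>+t. p t \<partial>W) - enn2real (\<integral>\<^sup>+t. q t \<partial>W)"
    using pi qi ip iq by simp
  finally show "(\<integral>t. \<integral>x. F t x \<partial>K t \<partial>W) = enn2real (\<integral>\<^sup>+t. \<integral>\<^sup>+x. ennreal (F t x) \<partial>K t \<partial>W) - enn2real (\<integral>\<^sup>+t. \<integral>\<^sup>+x. ennreal (- F t x) \<partial>K t \<partial>W)"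
    by (simp add: p_def q_def)
qed

lemma abs_prod_le_sq: "\<bar>(a::real) * b\<bar> \<le> a\<^sup>2 + b\<^sup>2"
proof -
  have "0 \<le> (\<bar>a\<bar> - \<bar>b\<bar>)\<^sup>2" by simp
  then have "2 * \<bar>a\<bar> * \<bar>b\<bar> \<le> a\<^sup>2 + b\<^sup>2" by (simp add: power2_diff)
  moreover have "0 \<le> \<bar>a\<bar> * \<bar>b\<bar>" by simp
  ultimately show ?thesis unfolding abs_mult by linarith
qed


lemma abs_le_1_sq: "\<bar>a::real\<bar> \<le> 1 + a\<^sup>2"
  using abs_prod_le_sq[of a 1] by simp


locale slice_pos = slice +
  assumes Z_pos: "0 < Z"
begin

definition P :: "(real \<Rightarrow> real) \<Rightarrow> 'a \<Rightarrow> real" where "P g x = (\<integral>t. g t \<partial>V x)"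
definition R :: "('a \<Rightarrow> real) \<Rightarrow> real \<Rightarrow> real" where "R f t = (\<integral>x. f x \<partial>U t)"

lemma P_meas[measurable]: "g \<in> borel_measurable borel \<Longrightarrow> P g \<in> borel_measurable lebesgue"
proof -
  assume "g \<in> borel_measurable borel"
  then have "g \<in> borel_measurable lborel" by simp
  then show ?thesis unfolding P_def
    by (rule measurable_compose[OF V_meas integral_measurable_subprob_algebra])
qed

lemma R_meas[measurable]: "f \<in> borel_measurable lebesgue \<Longrightarrow> R f \<in> borel_measurable borel"
proof -
  assume "f \<in> borel_measurable lebesgue"
  then have "(\<lambda>t. integral\<^sup>L (U t) f) \<in> borel_measurable lborel"
    by (rule measurable_compose[OF U_meas integral_measurable_subprob_algebra])
  then show ?thesis unfolding R_def by simp
qed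

lemma ennreal_level_div: "0 < t \<Longrightarrow> ennreal (level_fun G \<rho> t / Z) = ennreal (1/Z) * L t"
proof -
  assume t: "0 < t"
  have "ennreal (level_fun G \<rho> t / Z) = ennreal ((1/Z) * level_fun G \<rho> t)" by simp
  also have "\<dots> = ennreal (1/Z) * ennreal (level_fun G \<rho> t)"
    by (rule ennreal_mult) (use Z_pos in \<open>auto simp: level_fun_def\<close>)
  finally show ?thesis using level_fun_L[OF t] by simp
qed

lemma prob_M: "prob_space M"
proof
  have "emeasure M (space M) = (\<integral>\<^sup>+x. 1 \<partial>M)" by simp
  also have "\<dots> = (\<integral>\<^sup>+x. ennreal (r x / Z) * 1 \<partial>lebesgue)" by (rule nn_M) simp
  also have "\<dots> = (\<integral>\<^sup>+x. ennreal (1/Z) * ennreal (r x) \<partial>lebesgue)"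
    by (intro nn_integral_cong) (use Z_pos r_nonneg in \<open>simp add: ennreal_mult[symmetric]\<close>)
  also have "\<dots> = ennreal (1/Z) * ennreal Z" by (simp add: nn_integral_cmult nn_r)
  also have "\<dots> = 1" using Z_pos by (simp add: ennreal_mult[symmetric])
  finally show "emeasure M (space M) = 1" .
qed

lemma prob_N: "prob_space N"
proof
  have "emeasure N (space N) = (\<integral>\<^sup>+t. 1 \<partial>N)" by simp
  also have "\<dots> = (\<integral>\<^sup>+t. ennreal (indicator {0<..} t * level_fun G \<rho> t / Z) * 1 \<partial>lborel)" by (rule nn_N) simp
  also have "\<dots> = (\<integral>\<^sup>+t. ennreal (1/Z) * (indicator {0<..} t * L t) \<partial>lborel)"
    by (intro nn_integral_cong) (auto simp: ennreal_level_div indicator_def)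
  also have "\<dots> = ennreal (1/Z) * ennreal Z" by (simp add: nn_integral_cmult Zmu_nn)
  also have "\<dots> = 1" using Z_pos by (simp add: ennreal_mult[symmetric])
  finally show "emeasure N (space N) = 1" .
qed

lemma AE_M: "AE x in M. x \<in> G"
proof -
  have "AE x in lebesgue. 0 < r x / Z \<longrightarrow> x \<in> G"
  proof (rule AE_I2, rule impI)
    fix x assume "0 < r x / Z"
    then have "0 < r x" using Z_pos by (simp add: zero_less_divide_iff)
    then show "x \<in> G" using r_pos_iff by simp
  qed
  then show ?thesis unfolding M_density by (subst AE_density) (simp, simp)
qed

lemma AE_N: "AE t in N. 0 < t \<and> L t \<noteq> 0"
proof -
  have "AE t in lborel. 0 < indicator {0<..} t * level_fun G \<rho> t / Z \<longrightarrow> 0 < t \<and> L t \<noteq> 0"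
  proof (rule AE_I2, rule impI)
    fix t assume a0: "0 < indicator {0<..} t * level_fun G \<rho> t / Z"
    then have a: "ennreal (indicator {0<..} t * level_fun G \<rho> t / Z) \<noteq> 0" by (metis ennreal_eq_0_iff not_le)
    have t: "0 < t"
    proof (rule ccontr)
      assume "\<not> 0 < t"
      then have "indicator {0<..} t = (0::real)" by simp
      then show False using a by simp
    qed
    then have "ennreal (level_fun G \<rho> t / Z) \<noteq> 0" using a by simp
    then have "ennreal (1/Z) * L t \<noteq> 0" using ennreal_level_div[OF t] by simp
    then have "L t \<noteq> 0" by auto
    then show "0 < t \<and> L t \<noteq> 0" using t by simp
  qed
  then show ?thesis unfolding N_density by (subst AE_density) (simp, simp)
qed

lemma V_prob_AE: "AE x in M. prob_space (V x)"
  using AE_M by eventually_elim (rule V_prob)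

lemma U_prob_AE: "AE t in N. prob_space (U t)"
  using AE_N by eventually_elim (auto intro: U_prob)

lemma nn_V_const: "(\<integral>\<^sup>+t. c \<partial>V x) \<le> c"
proof -
  have "(\<integral>\<^sup>+t. c \<partial>V x) = c * emeasure (V x) (space (V x))" by simp
  also have "\<dots> \<le> c * 1" by (intro mult_left_mono subprob_space.subprob_emeasure_le_1[OF subprob_V]) simp
  finally show ?thesis by simp
qed

lemma nn_U_const: "(\<integral>\<^sup>+x. c \<partial>U t) \<le> c"
proof -
  have "(\<integral>\<^sup>+x. c \<partial>U t) = c * emeasure (U t) (space (U t))" by simp
  also have "\<dots> \<le> c * 1" by (intro mult_left_mono subprob_space.subprob_emeasure_le_1[OF subprob_U]) simp
  finally show ?thesis by simp
qed

lemma nn_V_const_eq: "x \<in> G \<Longrightarrow> (\<integral>\<^sup>+t. c \<partial>V x) = c"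
  using prob_space.emeasure_space_1[OF V_prob, of x] by simp

lemma nn_U_const_eq: "prob_space (U t) \<Longrightarrow> (\<integral>\<^sup>+x. c \<partial>U t) = c"
  using prob_space.emeasure_space_1[of "U t"] by simp

lemma ennreal_abs_prod_le: "ennreal \<bar>a * b\<bar> \<le> ennreal (a\<^sup>2) + ennreal (b\<^sup>2)"
proof -
  have "ennreal \<bar>a * b\<bar> \<le> ennreal (a\<^sup>2 + b\<^sup>2)" by (intro ennreal_leI abs_prod_le_sq)
  also have "\<dots> = ennreal (a\<^sup>2) + ennreal (b\<^sup>2)" by (intro ennreal_plus) auto
  finally show ?thesis .
qed

lemma fin_prod:
  assumes f[measurable]: "f \<in> borel_measurable lebesgue" and g[measurable]: "g \<in> borel_measurable borel"
    and ff: "(\<integral>\<^sup>+x. ennreal ((f x)\<^sup>2) \<partial>M) < \<infinity>" and gf: "(\<integral>\<^sup>+t. ennreal ((g t)\<^sup>2) \<partial>N) < \<infinity>"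
  shows "(\<integral>\<^sup>+x. \<integral>\<^sup>+t. ennreal \<bar>f x * g t\<bar> \<partial>V x \<partial>M) < \<infinity>"
proof -
  have m1: "(\<lambda>x. \<integral>\<^sup>+t. ennreal ((f x)\<^sup>2) \<partial>V x) \<in> borel_measurable M"
    by (rule nn_integral_measurable_subprob_algebra2[OF _ V_meas']) measurable
  have m2: "(\<lambda>x. \<integral>\<^sup>+t. ennreal ((g t)\<^sup>2) \<partial>V x) \<in> borel_measurable M"
    by (rule nn_integral_measurable_subprob_algebra2[OF _ V_meas']) measurable
  have "(\<integral>\<^sup>+x. \<integral>\<^sup>+t. ennreal \<bar>f x * g t\<bar> \<partial>V x \<partial>M) \<le> (\<integral>\<^sup>+x. \<integral>\<^sup>+t. ennreal ((f x)\<^sup>2) + ennreal ((g t)\<^sup>2) \<partial>V x \<partial>M)"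
    by (intro nn_integral_mono ennreal_abs_prod_le)
  also have "\<dots> = (\<integral>\<^sup>+x. (\<integral>\<^sup>+t. ennreal ((f x)\<^sup>2) \<partial>V x) + (\<integral>\<^sup>+t. ennreal ((g t)\<^sup>2) \<partial>V x) \<partial>M)"
    by (intro nn_integral_cong nn_integral_add; measurable)
  also have "\<dots> = (\<integral>\<^sup>+x. \<integral>\<^sup>+t. ennreal ((f x)\<^sup>2) \<partial>V x \<partial>M) + (\<integral>\<^sup>+x. \<integral>\<^sup>+t. ennreal ((g t)\<^sup>2) \<partial>V x \<partial>M)"
    by (rule nn_integral_add[OF m1 m2])
  also have "\<dots> \<le> (\<integral>\<^sup>+x. ennreal ((f x)\<^sup>2) \<partial>M) + (\<integral>\<^sup>+t. ennreal ((g t)\<^sup>2) \<partial>N)"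
  proof (rule add_mono)
    show "(\<integral>\<^sup>+x. \<integral>\<^sup>+t. ennreal ((f x)\<^sup>2) \<partial>V x \<partial>M) \<le> (\<integral>\<^sup>+x. ennreal ((f x)\<^sup>2) \<partial>M)"
      by (intro nn_integral_mono nn_V_const)
    have "(\<integral>\<^sup>+x. \<integral>\<^sup>+t. ennreal ((g t)\<^sup>2) \<partial>V x \<partial>M) = (\<integral>\<^sup>+t. \<integral>\<^sup>+x. ennreal ((g t)\<^sup>2) \<partial>U t \<partial>N)"
      by (rule adj_nn[OF Z_pos]) measurable
    also have "\<dots> \<le> (\<integral>\<^sup>+t. ennreal ((g t)\<^sup>2) \<partial>N)"
      by (intro nn_integral_mono nn_U_const)
    finally show "(\<integral>\<^sup>+x. \<integral>\<^sup>+t. ennreal ((g t)\<^sup>2) \<partial>V x \<partial>M) \<le> (\<integral>\<^sup>+t. ennreal ((g t)\<^sup>2) \<partial>N)" .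
  qed
  finally have "(\<integral>\<^sup>+x. \<integral>\<^sup>+t. ennreal \<bar>f x * g t\<bar> \<partial>V x \<partial>M) \<le> (\<integral>\<^sup>+x. ennreal ((f x)\<^sup>2) \<partial>M) + (\<integral>\<^sup>+t. ennreal ((g t)\<^sup>2) \<partial>N)" .
  moreover have "(\<integral>\<^sup>+x. ennreal ((f x)\<^sup>2) \<partial>M) + (\<integral>\<^sup>+t. ennreal ((g t)\<^sup>2) \<partial>N) < \<infinity>"
    using ff gf unfolding infinity_ennreal_def ennreal_add_less_top by (rule conjI)
  ultimately show ?thesis by (rule le_less_trans)
qed

end


lemma L1_of_L2:
  fixes f :: "'a \<Rightarrow> real"
  assumes "prob_space M" "f \<in> borel_measurable M" "(\<integral>\<^sup>+x. ennreal ((f x)\<^sup>2) \<partial>M) < \<infinity>"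
  shows "integrable M f" "(\<integral>\<^sup>+x. ennreal \<bar>f x\<bar> \<partial>M) < \<infinity>"
proof -
  interpret prob_space M by fact
  have "(\<integral>\<^sup>+x. ennreal \<bar>f x\<bar> \<partial>M) \<le> (\<integral>\<^sup>+x. 1 + ennreal ((f x)\<^sup>2) \<partial>M)"
    by (intro nn_integral_mono) (metis abs_le_1_sq ennreal_1 ennreal_leI ennreal_plus zero_le_one zero_le_power2)
  also have "\<dots> = 1 + (\<integral>\<^sup>+x. ennreal ((f x)\<^sup>2) \<partial>M)"
    using assms(2) by (subst nn_integral_add) (auto simp: emeasure_space_1)
  also have "\<dots> < \<infinity>" using assms(3) by (simp add: ennreal_add_less_top)
  finally show fin: "(\<integral>\<^sup>+x. ennreal \<bar>f x\<bar> \<partial>M) < \<infinity>" .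
  show "integrable M f" using fin assms(2) by (simp add: integrable_iff_bounded)
qed

context slice_pos
begin

lemma adj_prod:
  assumes f[measurable]: "f \<in> borel_measurable lebesgue" and g[measurable]: "g \<in> borel_measurable borel"
    and ff: "(\<integral>\<^sup>+x. ennreal ((f x)\<^sup>2) \<partial>M) < \<infinity>" and gf: "(\<integral>\<^sup>+t. ennreal ((g t)\<^sup>2) \<partial>N) < \<infinity>"
  shows "AE x in M. integrable (V x) (\<lambda>t. f x * g t)"
    and "AE t in N. integrable (U t) (\<lambda>x. f x * g t)"
    and "integrable M (\<lambda>x. f x * P g x)" and "integrable N (\<lambda>t. g t * R f t)"
    and "(\<integral>x. f x * P g x \<partial>M) = (\<integral>t. g t * R f t \<partial>N)"
proof -
  have fin1: "(\<integral>\<^sup>+x. \<integral>\<^sup>+t. ennreal \<bar>f x * g t\<bar> \<partial>V x \<partial>M) < \<infinity>"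
    by (rule fin_prod[OF f g ff gf])
  have eqa: "(\<integral>\<^sup>+x. \<integral>\<^sup>+t. ennreal \<bar>f x * g t\<bar> \<partial>V x \<partial>M) = (\<integral>\<^sup>+t. \<integral>\<^sup>+x. ennreal \<bar>f x * g t\<bar> \<partial>U t \<partial>N)"
    by (rule adj_nn[OF Z_pos]) measurable
  have eqp: "(\<integral>\<^sup>+x. \<integral>\<^sup>+t. ennreal (f x * g t) \<partial>V x \<partial>M) = (\<integral>\<^sup>+t. \<integral>\<^sup>+x. ennreal (f x * g t) \<partial>U t \<partial>N)"
    by (rule adj_nn[OF Z_pos]) measurable
  have eqq: "(\<integral>\<^sup>+x. \<integral>\<^sup>+t. ennreal (- (f x * g t)) \<partial>V x \<partial>M) = (\<integral>\<^sup>+t. \<integral>\<^sup>+x. ennreal (- (f x * g t)) \<partial>U t \<partial>N)"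
    by (rule adj_nn[OF Z_pos]) measurable
  have PV: "(\<integral>t. f x * g t \<partial>V x) = f x * P g x" for x
    by (simp add: P_def)
  have RU: "(\<integral>x. f x * g t \<partial>U t) = g t * R f t" for t
    by (simp add: R_def mult.commute)
  note I1 = iter_signed[where W=M and K=V and Nb=borel and F="\<lambda>x t. f x * g t"]
  have h1: "(\<lambda>x. \<integral>\<^sup>+t. ennreal (f x * g t) \<partial>V x) \<in> borel_measurable M"
    by (rule nn_integral_measurable_subprob_algebra2[OF _ V_meas']) measurable
  have h2: "(\<lambda>x. \<integral>\<^sup>+t. ennreal (- (f x * g t)) \<partial>V x) \<in> borel_measurable M"
    by (rule nn_integral_measurable_subprob_algebra2[OF _ V_meas']) measurable
  have h3: "(\<lambda>x. \<integral>t. f x * g t \<partial>V x) \<in> borel_measurable M"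
    unfolding PV by measurable
  note A = I1[OF _ _ h1 h2 h3 fin1]
  note I2 = iter_signed[where W=N and K=U and Nb=lebesgue and F="\<lambda>t x. f x * g t"]
  have k1: "(\<lambda>t. \<integral>\<^sup>+x. ennreal (f x * g t) \<partial>U t) \<in> borel_measurable N"
    by (rule nn_integral_measurable_subprob_algebra2[OF _ U_meas']) measurable
  have k2: "(\<lambda>t. \<integral>\<^sup>+x. ennreal (- (f x * g t)) \<partial>U t) \<in> borel_measurable N"
    by (rule nn_integral_measurable_subprob_algebra2[OF _ U_meas']) measurable
  have k3: "(\<lambda>t. \<integral>x. f x * g t \<partial>U t) \<in> borel_measurable N"
    unfolding RU by measurable
  have fin2: "(\<integral>\<^sup>+t. \<integral>\<^sup>+x. ennreal \<bar>f x * g t\<bar> \<partial>U t \<partial>N) < \<infinity>"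
    using fin1 eqa by simp
  note B = I2[OF _ _ k1 k2 k3 fin2]
  show "AE x in M. integrable (V x) (\<lambda>t. f x * g t)" by (rule A(1)) auto
  show "AE t in N. integrable (U t) (\<lambda>x. f x * g t)" by (rule B(1)) auto
  show "integrable M (\<lambda>x. f x * P g x)" using A(2) unfolding PV by auto
  show "integrable N (\<lambda>t. g t * R f t)" using B(2) unfolding RU by auto
  have "(\<integral>x. f x * P g x \<partial>M) = (\<integral>x. \<integral>t. f x * g t \<partial>V x \<partial>M)" unfolding PV ..
  also have "\<dots> = (\<integral>t. \<integral>x. f x * g t \<partial>U t \<partial>N)"
    using A(3) B(3) eqp eqq by auto
  also have "\<dots> = (\<integral>t. g t * R f t \<partial>N)" unfolding RU ..
  finally show "(\<integral>x. f x * P g x \<partial>M) = (\<integral>t. g t * R f t \<partial>N)" .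
qed

lemma one_L2M: "(\<integral>\<^sup>+x. ennreal ((1::real)\<^sup>2) \<partial>M) < \<infinity>"
  using prob_space.emeasure_space_1[OF prob_M] by simp

lemma one_L2N: "(\<integral>\<^sup>+t. ennreal ((1::real)\<^sup>2) \<partial>N) < \<infinity>"
  using prob_space.emeasure_space_1[OF prob_N] by simp

lemma P_one: "x \<in> G \<Longrightarrow> P (\<lambda>_. 1) x = 1"
  unfolding P_def using prob_space.prob_space[OF V_prob] by simp

lemma R_one: assumes p: "prob_space (U t)" shows "R (\<lambda>_. 1) t = 1"
  unfolding R_def using prob_space.prob_space[OF p] by simp

lemma R_props:
  assumes f[measurable]: "f \<in> borel_measurable lebesgue" and ff: "(\<integral>\<^sup>+x. ennreal ((f x)\<^sup>2) \<partial>M) < \<infinity>"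
  shows "AE t in N. integrable (U t) f" and "integrable N (R f)" and "(\<integral>t. R f t \<partial>N) = (\<integral>x. f x \<partial>M)"
proof -
  note A = adj_prod[OF f borel_measurable_const ff one_L2N, simplified]
  show "AE t in N. integrable (U t) f" using A(2) .
  show "integrable N (R f)" using A(4) .
  have "(\<integral>x. f x \<partial>M) = (\<integral>x. f x * P (\<lambda>_. 1) x \<partial>M)"
    by (rule integral_cong_AE) (use AE_M P_one in \<open>auto\<close>)
  then show "(\<integral>t. R f t \<partial>N) = (\<integral>x. f x \<partial>M)" using A(5) by simp
qed

lemma P_props:
  assumes g[measurable]: "g \<in> borel_measurable borel" and gf: "(\<integral>\<^sup>+t. ennreal ((g t)\<^sup>2) \<partial>N) < \<infinity>"
  shows "AE x in M. integrable (V x) g" and "integrable M (P g)" and "(\<integral>x. P g x \<partial>M) = (\<integral>t. g t \<partial>N)"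
proof -
  note A = adj_prod[OF borel_measurable_const g one_L2M gf, simplified]
  show "AE x in M. integrable (V x) g" using A(1) .
  show "integrable M (P g)" using A(3) .
  have "(\<integral>t. g t \<partial>N) = (\<integral>t. g t * R (\<lambda>_. 1) t \<partial>N)"
    by (rule integral_cong_AE) (use U_prob_AE R_one in \<open>auto\<close>)
  then show "(\<integral>x. P g x \<partial>M) = (\<integral>t. g t \<partial>N)" using A(5) by simp
qed

lemma R_L2:
  assumes f[measurable]: "f \<in> borel_measurable lebesgue"
  shows "(\<integral>\<^sup>+t. ennreal ((R f t)\<^sup>2) \<partial>N) \<le> (\<integral>\<^sup>+x. ennreal ((f x)\<^sup>2) \<partial>M)"
proof -
  have "(\<integral>\<^sup>+t. ennreal ((R f t)\<^sup>2) \<partial>N) \<le> (\<integral>\<^sup>+t. \<integral>\<^sup>+x. ennreal ((f x)\<^sup>2) \<partial>U t \<partial>N)"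
    unfolding R_def by (intro nn_integral_mono jensen_sq U_cases) simp
  also have "\<dots> = (\<integral>\<^sup>+x. \<integral>\<^sup>+t. ennreal ((f x)\<^sup>2) \<partial>V x \<partial>M)"
    by (rule adj_nn[OF Z_pos, symmetric]) measurable
  also have "\<dots> \<le> (\<integral>\<^sup>+x. ennreal ((f x)\<^sup>2) \<partial>M)"
    by (intro nn_integral_mono nn_V_const)
  finally show ?thesis .
qed

lemma P_L2:
  assumes g[measurable]: "g \<in> borel_measurable borel"
  shows "(\<integral>\<^sup>+x. ennreal ((P g x)\<^sup>2) \<partial>M) \<le> (\<integral>\<^sup>+t. ennreal ((g t)\<^sup>2) \<partial>N)"
proof -
  have "(\<integral>\<^sup>+x. ennreal ((P g x)\<^sup>2) \<partial>M) \<le> (\<integral>\<^sup>+x. \<integral>\<^sup>+t. ennreal ((g t)\<^sup>2) \<partial>V x \<partial>M)"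
    unfolding P_def by (intro nn_integral_mono jensen_sq V_cases) simp
  also have "\<dots> = (\<integral>\<^sup>+t. \<integral>\<^sup>+x. ennreal ((g t)\<^sup>2) \<partial>U t \<partial>N)"
    by (rule adj_nn[OF Z_pos]) measurable
  also have "\<dots> \<le> (\<integral>\<^sup>+t. ennreal ((g t)\<^sup>2) \<partial>N)"
    by (intro nn_integral_mono nn_U_const)
  finally show ?thesis .
qed

end


context slice_pos
begin

lemma K_eq:
  assumes f[measurable]: "f \<in> borel_measurable lebesgue" and ff: "(\<integral>\<^sup>+x. ennreal ((f x)\<^sup>2) \<partial>M) < \<infinity>"
  shows "AE x in M. kernel_op (slice_kernel G \<rho>) f x = P (R f) x"
proof -
  define H where "H t = (\<integral>\<^sup>+y. ennreal \<bar>f y\<bar> \<partial>U t)" for t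
  have Hm[measurable]: "H \<in> borel_measurable borel"
  proof -
    have "(\<lambda>t. \<integral>\<^sup>+y. ennreal \<bar>f y\<bar> \<partial>U t) \<in> borel_measurable lborel"
      by (rule measurable_compose[OF U_meas nn_integral_measurable_subprob_algebra]) measurable
    then show ?thesis unfolding H_def by simp
  qed
  have HV: "(\<lambda>x. \<integral>\<^sup>+t. H t \<partial>V x) \<in> borel_measurable M"
    by (rule measurable_compose[OF V_meas' nn_integral_measurable_subprob_algebra]) simp
  have "(\<integral>\<^sup>+x. \<integral>\<^sup>+t. H t \<partial>V x \<partial>M) = (\<integral>\<^sup>+t. \<integral>\<^sup>+x. H t \<partial>U t \<partial>N)"
    by (rule adj_nn[OF Z_pos]) measurable
  also have "\<dots> \<le> (\<integral>\<^sup>+t. H t \<partial>N)" by (intro nn_integral_mono nn_U_const)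
  also have "(\<integral>\<^sup>+t. H t \<partial>N) = (\<integral>\<^sup>+x. \<integral>\<^sup>+t. ennreal \<bar>f x\<bar> \<partial>V x \<partial>M)"
    unfolding H_def by (rule adj_nn[OF Z_pos, symmetric]) measurable
  also have "\<dots> \<le> (\<integral>\<^sup>+x. ennreal \<bar>f x\<bar> \<partial>M)" by (intro nn_integral_mono nn_V_const)
  also have "\<dots> < \<infinity>" by (rule L1_of_L2(2)[OF prob_M _ ff]) simp
  finally have "(\<integral>\<^sup>+x. \<integral>\<^sup>+t. H t \<partial>V x \<partial>M) < \<infinity>" .
  then have "AE x in M. (\<integral>\<^sup>+t. H t \<partial>V x) \<noteq> \<infinity>"
    by (intro nn_integral_PInf_AE HV) simp
  then show ?thesis using AE_M
  proof eventually_elim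
    case (elim x)
    have "(\<integral>\<^sup>+y. ennreal \<bar>f y\<bar> \<partial>(V x \<bind> U)) = (\<integral>\<^sup>+t. H t \<partial>V x)"
      unfolding H_def by (rule nn_integral_bind[OF _ U_meas_V]) measurable
    then have fin: "(\<integral>\<^sup>+y. ennreal \<bar>f y\<bar> \<partial>(V x \<bind> U)) < \<infinity>" using elim by (simp add: less_top)
    have "kernel_op (slice_kernel G \<rho>) f x = integral\<^sup>L (V x \<bind> U) f"
      unfolding kernel_op_def slice_kernel_eq[OF elim(2)] ..
    also have "\<dots> = (\<integral>t. integral\<^sup>L (U t) f \<partial>V x)"
      by (rule integral_bind_real(3)[OF U_meas_V f fin]) simp
    also have "\<dots> = P (R f) x" unfolding P_def R_def ..
    finally show ?case .
  qed
qed

lemma Q_eq: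
  assumes g[measurable]: "g \<in> borel_measurable borel" and gf: "(\<integral>\<^sup>+t. ennreal ((g t)\<^sup>2) \<partial>N) < \<infinity>"
  shows "AE t in N. kernel_op (Q_kernel G \<rho>) g t = R (P g) t"
proof -
  define H where "H x = (\<integral>\<^sup>+s. ennreal \<bar>g s\<bar> \<partial>V x)" for x
  have Hm[measurable]: "H \<in> borel_measurable lebesgue"
    unfolding H_def by (rule measurable_compose[OF V_meas nn_integral_measurable_subprob_algebra]) measurable
  have HU: "(\<lambda>t. \<integral>\<^sup>+x. H x \<partial>U t) \<in> borel_measurable N"
    by (rule measurable_compose[OF U_meas' nn_integral_measurable_subprob_algebra]) simp
  have "(\<integral>\<^sup>+t. \<integral>\<^sup>+x. H x \<partial>U t \<partial>N) = (\<integral>\<^sup>+x. \<integral>\<^sup>+t. H x \<partial>V x \<partial>M)"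
    by (rule adj_nn[OF Z_pos, symmetric]) measurable
  also have "\<dots> \<le> (\<integral>\<^sup>+x. H x \<partial>M)" by (intro nn_integral_mono nn_V_const)
  also have "(\<integral>\<^sup>+x. H x \<partial>M) = (\<integral>\<^sup>+t. \<integral>\<^sup>+x. ennreal \<bar>g t\<bar> \<partial>U t \<partial>N)"
    unfolding H_def by (rule adj_nn[OF Z_pos]) measurable
  also have "\<dots> \<le> (\<integral>\<^sup>+t. ennreal \<bar>g t\<bar> \<partial>N)" by (intro nn_integral_mono nn_U_const)
  also have "\<dots> < \<infinity>" by (rule L1_of_L2(2)[OF prob_N _ gf]) simp
  finally have "(\<integral>\<^sup>+t. \<integral>\<^sup>+x. H x \<partial>U t \<partial>N) < \<infinity>" .
  then have "AE t in N. (\<integral>\<^sup>+x. H x \<partial>U t) \<noteq> \<infinity>"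
    by (intro nn_integral_PInf_AE HU) simp
  then show ?thesis using AE_N
  proof eventually_elim
    case (elim t)
    have "(\<integral>\<^sup>+s. ennreal \<bar>g s\<bar> \<partial>(U t \<bind> V)) = (\<integral>\<^sup>+x. H x \<partial>U t)"
      unfolding H_def by (rule nn_integral_bind[OF _ V_meas_U]) measurable
    then have fin: "(\<integral>\<^sup>+s. ennreal \<bar>g s\<bar> \<partial>(U t \<bind> V)) < \<infinity>" using elim by (simp add: less_top)
    have g': "g \<in> borel_measurable lborel" by simp
    have "kernel_op (Q_kernel G \<rho>) g t = integral\<^sup>L (U t \<bind> V) g"
      unfolding kernel_op_def Q_kernel_eq[OF conjunct1[OF elim(2)]] ..
    also have "\<dots> = (\<integral>x. integral\<^sup>L (V x) g \<partial>U t)"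
      by (rule integral_bind_real(3)[OF V_meas_U g' fin]) simp
    also have "\<dots> = R (P g) t" unfolding P_def R_def ..
    finally show ?case .
  qed
qed

end


definition L2 :: "'a measure \<Rightarrow> ('a \<Rightarrow> real) \<Rightarrow> bool" where
  "L2 M f \<longleftrightarrow> f \<in> borel_measurable M \<and> integrable M (\<lambda>x. (f x)\<^sup>2)"
definition n2 :: "'a measure \<Rightarrow> ('a \<Rightarrow> real) \<Rightarrow> real" where
  "n2 M f = (\<integral>x. (f x)\<^sup>2 \<partial>M)"
definition Ball2 :: "'a measure \<Rightarrow> ('a \<Rightarrow> real) set" where
  "Ball2 M = {f. L2 M f \<and> n2 M f \<le> 1}"
definition opsup :: "'a measure \<Rightarrow> 'b measure \<Rightarrow> (('a \<Rightarrow> real) \<Rightarrow> ('b \<Rightarrow> real)) \<Rightarrow> real" where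
  "opsup M N B = Sup ((\<lambda>f. n2 N (B f)) ` Ball2 M)"

lemma n2_nonneg: "0 \<le> n2 M f"
  unfolding n2_def by simp

lemma zero_Ball2: "(\<lambda>_. 0) \<in> Ball2 M"
  by (simp add: Ball2_def L2_def n2_def)

lemma L2_scale: "L2 M f \<Longrightarrow> L2 M (\<lambda>x. c * f x) \<and> n2 M (\<lambda>x. c * f x) = c\<^sup>2 * n2 M f"
  unfolding L2_def n2_def by (auto simp: power_mult_distrib)

lemma cs_n2:
  assumes "L2 M u" "L2 M v"
  shows "(\<integral>x. u x * v x \<partial>M)\<^sup>2 \<le> n2 M u * n2 M v"
  using cauchy_schwarz_integral(2)[of u M v] assms unfolding L2_def n2_def by auto

lemma n2_self: "n2 M u = (\<integral>x. u x * u x \<partial>M)"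
  unfolding n2_def by (simp add: power2_eq_square)

locale adjpair =
  fixes M :: "'a measure" and N :: "'b measure"
    and A :: "('b \<Rightarrow> real) \<Rightarrow> 'a \<Rightarrow> real" and B :: "('a \<Rightarrow> real) \<Rightarrow> 'b \<Rightarrow> real"
  assumes B_L2: "\<And>f. L2 M f \<Longrightarrow> L2 N (B f) \<and> n2 N (B f) \<le> n2 M f"
    and A_L2: "\<And>g. L2 N g \<Longrightarrow> L2 M (A g) \<and> n2 M (A g) \<le> n2 N g"
    and adj: "\<And>f g. L2 M f \<Longrightarrow> L2 N g \<Longrightarrow> (\<integral>x. A g x * f x \<partial>M) = (\<integral>t. g t * B f t \<partial>N)"
    and A_hom: "\<And>c g. A (\<lambda>t. c * g t) = (\<lambda>x. c * A g x)"
    and B_hom: "\<And>c f. B (\<lambda>x. c * f x) = (\<lambda>t. c * B f t)"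
begin

lemma swap: "adjpair N M B A"
proof
  fix f g assume "L2 N f" "L2 M g"
  then show "(\<integral>x. B g x * f x \<partial>N) = (\<integral>t. g t * A f t \<partial>M)"
    using adj[of g f] by (simp add: mult.commute)
qed (use B_L2 A_L2 A_hom B_hom in auto)

lemma bdd_B: "bdd_above ((\<lambda>f. n2 N (B f)) ` Ball2 M)"
  by (rule bdd_aboveI[of _ 1]) (use B_L2 in \<open>force simp: Ball2_def\<close>)

lemma alpha_upper: "f \<in> Ball2 M \<Longrightarrow> n2 N (B f) \<le> opsup M N B"
  unfolding opsup_def by (rule cSup_upper[OF _ bdd_B]) auto

lemma alpha_nonneg: "0 \<le> opsup M N B"
  using alpha_upper[OF zero_Ball2] n2_nonneg[of N "B (\<lambda>_. 0)"] by linarith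

lemma B_bound:
  assumes f: "L2 M f"
  shows "n2 N (B f) \<le> opsup M N B * n2 M f"
proof (cases "n2 M f = 0")
  case True
  then show ?thesis using B_L2[OF f] by simp
next
  case False
  then have pos: "0 < n2 M f" using n2_nonneg[of M f] by simp
  define c where "c = 1 / sqrt (n2 M f)"
  have c2: "c\<^sup>2 = 1 / n2 M f" using pos by (simp add: c_def power_divide)
  have sc: "L2 M (\<lambda>x. c * f x)" "n2 M (\<lambda>x. c * f x) = 1"
    using L2_scale[OF f, of c] c2 pos by auto
  then have "(\<lambda>x. c * f x) \<in> Ball2 M" by (simp add: Ball2_def)
  then have "n2 N (B (\<lambda>x. c * f x)) \<le> opsup M N B" by (rule alpha_upper)
  moreover have "n2 N (B (\<lambda>x. c * f x)) = c\<^sup>2 * n2 N (B f)"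
    unfolding B_hom using L2_scale[of N "B f" c] B_L2[OF f] by simp
  ultimately have "n2 N (B f) / n2 M f \<le> opsup M N B" using c2 by simp
  then show ?thesis using pos by (simp add: divide_le_eq)
qed

lemma beta_le_alpha: "opsup N M A \<le> opsup M N B"
  unfolding opsup_def[of N M A]
proof (rule cSup_least)
  show "(\<lambda>g. n2 M (A g)) ` Ball2 N \<noteq> {}" using zero_Ball2 by auto
next
  fix y assume "y \<in> (\<lambda>g. n2 M (A g)) ` Ball2 N"
  then obtain g where g: "g \<in> Ball2 N" and y: "y = n2 M (A g)" by auto
  have gL: "L2 N g" and g1: "n2 N g \<le> 1" using g by (auto simp: Ball2_def)
  define u where "u = A g"
  have uL: "L2 M u" using A_L2[OF gL] by (simp add: u_def)
  have Bu: "L2 N (B u)" using B_L2[OF uL] by simp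
  have "n2 M u = (\<integral>t. g t * B u t \<partial>N)"
    unfolding n2_self using adj[OF uL gL] by (simp add: u_def)
  then have "(n2 M u)\<^sup>2 \<le> n2 N g * n2 N (B u)" using cs_n2[OF gL Bu] by simp
  also have "\<dots> \<le> 1 * (opsup M N B * n2 M u)"
    by (intro mult_mono g1 B_bound uL) (auto intro: n2_nonneg)
  finally have "n2 M u * n2 M u \<le> opsup M N B * n2 M u" by (simp add: power2_eq_square)
  then have "n2 M u \<le> opsup M N B"
    using alpha_nonneg n2_nonneg[of M u]
    by (cases "n2 M u = 0") (auto simp: mult_le_cancel_right)
  then show "y \<le> opsup M N B" using y u_def by simp
qed

lemma bdd_AB: "bdd_above ((\<lambda>f. n2 M (A (B f))) ` Ball2 M)"
proof (rule bdd_aboveI[of _ 1])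
  fix y assume "y \<in> (\<lambda>f. n2 M (A (B f))) ` Ball2 M"
  then obtain f where f: "f \<in> Ball2 M" and y: "y = n2 M (A (B f))" by auto
  have "L2 M f" "n2 M f \<le> 1" using f by (auto simp: Ball2_def)
  then show "y \<le> 1" using B_L2[of f] A_L2[of "B f"] y by fastforce
qed

lemma a_eq: "opsup M M (\<lambda>f. A (B f)) = (opsup M N B)\<^sup>2"
proof (rule antisym)
  interpret S: adjpair N M B A by (rule swap)
  have ne: "(\<lambda>f. n2 M (A (B f))) ` Ball2 M \<noteq> {}" using zero_Ball2 by auto
  show "opsup M M (\<lambda>f. A (B f)) \<le> (opsup M N B)\<^sup>2"
    unfolding opsup_def[of M M]
  proof (rule cSup_least[OF ne])
    fix y assume "y \<in> (\<lambda>f. n2 M (A (B f))) ` Ball2 M"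
    then obtain f where f: "f \<in> Ball2 M" and y: "y = n2 M (A (B f))" by auto
    have fL: "L2 M f" and f1: "n2 M f \<le> 1" using f by (auto simp: Ball2_def)
    have BL: "L2 N (B f)" using B_L2[OF fL] by simp
    have "n2 M (A (B f)) \<le> opsup N M A * n2 N (B f)" by (rule S.B_bound[OF BL])
    also have "\<dots> \<le> opsup M N B * (opsup M N B * n2 M f)"
      by (intro mult_mono beta_le_alpha B_bound fL alpha_nonneg) (auto intro: n2_nonneg)
    also have "\<dots> \<le> opsup M N B * (opsup M N B * 1)"
      by (intro mult_left_mono f1 alpha_nonneg)
    finally show "y \<le> (opsup M N B)\<^sup>2" using y by (simp add: power2_eq_square)
  qed
  define a where "a = opsup M M (\<lambda>f. A (B f))"
  have a_upper: "f \<in> Ball2 M \<Longrightarrow> n2 M (A (B f)) \<le> a" for f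
    unfolding a_def opsup_def by (rule cSup_upper[OF _ bdd_AB]) auto
  have a0: "0 \<le> a" using a_upper[OF zero_Ball2] n2_nonneg[of M "A (B (\<lambda>_. 0))"] by linarith
  have "opsup M N B \<le> sqrt a"
    unfolding opsup_def[of M N B]
  proof (rule cSup_least)
    show "(\<lambda>f. n2 N (B f)) ` Ball2 M \<noteq> {}" using zero_Ball2 by auto
  next
    fix y assume "y \<in> (\<lambda>f. n2 N (B f)) ` Ball2 M"
    then obtain f where f: "f \<in> Ball2 M" and y: "y = n2 N (B f)" by auto
    have fL: "L2 M f" and f1: "n2 M f \<le> 1" using f by (auto simp: Ball2_def)
    have BL: "L2 N (B f)" using B_L2[OF fL] by simp
    have ABL: "L2 M (A (B f))" using A_L2[OF BL] by simp
    have "n2 N (B f) = (\<integral>x. A (B f) x * f x \<partial>M)"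
      unfolding n2_self using adj[OF fL BL] by simp
    then have "(n2 N (B f))\<^sup>2 \<le> n2 M (A (B f)) * n2 M f" using cs_n2[OF ABL fL] by simp
    also have "\<dots> \<le> a * 1" by (intro mult_mono a_upper f f1 a0) (auto intro: n2_nonneg)
    finally have "(n2 N (B f))\<^sup>2 \<le> a" by simp
    then have "sqrt ((n2 N (B f))\<^sup>2) \<le> sqrt a" by (rule real_sqrt_le_mono)
    then show "y \<le> sqrt a" using y n2_nonneg[of N "B f"] by simp
  qed
  then have "(opsup M N B)\<^sup>2 \<le> (sqrt a)\<^sup>2"
    by (intro power_mono alpha_nonneg)
  then show "(opsup M N B)\<^sup>2 \<le> opsup M M (\<lambda>f. A (B f))" using a0 by (simp add: a_def)
qed

theorem sup_eq: "opsup M M (\<lambda>f. A (B f)) = opsup N N (\<lambda>g. B (A g))"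
proof -
  interpret S: adjpair N M B A by (rule swap)
  have "opsup N M A = opsup M N B" using beta_le_alpha S.beta_le_alpha by simp
  then show ?thesis using a_eq S.a_eq by simp
qed

end


lemma nn_sq_integrable: "integrable M (\<lambda>x. (f x)\<^sup>2) \<Longrightarrow> (\<integral>\<^sup>+x. ennreal ((f x)\<^sup>2) \<partial>M) = ennreal (\<integral>x. (f x)\<^sup>2 \<partial>M)"
  by (rule nn_integral_eq_integral) auto

lemma Ball2_char:
  "{f \<in> borel_measurable MM. (\<integral>\<^sup>+x. ennreal ((f x)\<^sup>2) \<partial>MM) \<le> 1} = Ball2 MM"
proof (intro equalityI subsetI)
  fix f assume "f \<in> {f \<in> borel_measurable MM. (\<integral>\<^sup>+x. ennreal ((f x)\<^sup>2) \<partial>MM) \<le> 1}"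
  then have fm: "f \<in> borel_measurable MM" and f1: "(\<integral>\<^sup>+x. ennreal ((f x)\<^sup>2) \<partial>MM) \<le> 1" by auto
  have "(\<integral>\<^sup>+x. ennreal ((f x)\<^sup>2) \<partial>MM) < \<infinity>" using f1 by (simp add: le_less_trans)
  then have int: "integrable MM (\<lambda>x. (f x)\<^sup>2)" using fm by (intro integrableI_nonneg) auto
  then have "ennreal (n2 MM f) \<le> 1" using f1 nn_sq_integrable[OF int] by (simp add: n2_def)
  then have "n2 MM f \<le> 1" by (simp add: ennreal_le_1)
  then show "f \<in> Ball2 MM" using fm int by (simp add: Ball2_def L2_def)
next
  fix f assume "f \<in> Ball2 MM"
  then have fm: "f \<in> borel_measurable MM" and int: "integrable MM (\<lambda>x. (f x)\<^sup>2)" and f1: "n2 MM f \<le> 1"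
    by (auto simp: Ball2_def L2_def)
  have "(\<integral>\<^sup>+x. ennreal ((f x)\<^sup>2) \<partial>MM) = ennreal (n2 MM f)" using nn_sq_integrable[OF int] by (simp add: n2_def)
  also have "\<dots> \<le> 1" using f1 by (simp add: ennreal_le_1)
  finally show "f \<in> {f \<in> borel_measurable MM. (\<integral>\<^sup>+x. ennreal ((f x)\<^sup>2) \<partial>MM) \<le> 1}" using fm by simp
qed

lemma L2_opnorm_eq:
  assumes eq: "\<And>f. f \<in> Ball2 MM \<Longrightarrow> (\<integral>\<^sup>+x. ennreal ((T f x)\<^sup>2) \<partial>MM) = ennreal (n2 MM (S f))"
    and bdd: "\<And>f. f \<in> Ball2 MM \<Longrightarrow> n2 MM (S f) \<le> 1"
  shows "L2_opnorm MM T = ereal (sqrt (opsup MM MM S))"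
proof -
  have bddA: "bdd_above ((\<lambda>f. n2 MM (S f)) ` Ball2 MM)" by (rule bdd_aboveI[of _ 1]) (use bdd in auto)
  have ne: "Ball2 MM \<noteq> {}" using zero_Ball2 by auto
  have s0: "0 \<le> opsup MM MM S"
    unfolding opsup_def using cSup_upper[OF _ bddA, of "n2 MM (S (\<lambda>_. 0))"] zero_Ball2[of MM] n2_nonneg[of MM "S (\<lambda>_. 0)"]
    by force
  have "(SUP f\<in>{f \<in> borel_measurable MM. (\<integral>\<^sup>+x. ennreal ((f x)\<^sup>2) \<partial>MM) \<le> 1}. \<integral>\<^sup>+x. ennreal ((T f x)\<^sup>2) \<partial>MM)
      = (SUP f\<in>Ball2 MM. ennreal (n2 MM (S f)))"
    unfolding Ball2_char by (rule SUP_cong) (auto simp: eq)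
  also have "\<dots> = ennreal (opsup MM MM S)"
    unfolding opsup_def
  proof (rule ennreal_SUP[symmetric])
    have "(SUP f\<in>Ball2 MM. ennreal (n2 MM (S f))) \<le> 1"
      by (rule SUP_least) (use bdd in \<open>simp add: ennreal_le_1\<close>)
    moreover have "(1::ennreal) < \<top>" using ennreal_less_top[of 1] by simp
    ultimately show "(SUP f\<in>Ball2 MM. ennreal (n2 MM (S f))) \<noteq> \<top>" by (metis le_less_trans less_irrefl)
  qed (rule ne)
  finally show ?thesis unfolding L2_opnorm_def Let_def using s0 by simp
qed

lemma center_L2:
  fixes h :: "'a \<Rightarrow> real"
  assumes P: "prob_space N'" and hm: "h \<in> borel_measurable N'" and h2: "integrable N' (\<lambda>t. (h t)\<^sup>2)"
    and hi: "integrable N' h" and hc: "(\<integral>t. h t \<partial>N') = c"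
  shows "integrable N' (\<lambda>t. (h t - c)\<^sup>2)" "(\<integral>t. (h t - c)\<^sup>2 \<partial>N') = (\<integral>t. (h t)\<^sup>2 \<partial>N') - c\<^sup>2"
proof -
  interpret prob_space N' by (rule P)
  have e: "(\<lambda>t. (h t - c)\<^sup>2) = (\<lambda>t. ((h t)\<^sup>2 - (2 * c) * h t) + c\<^sup>2)"
    by (auto simp: power2_eq_square algebra_simps)
  have i1: "integrable N' (\<lambda>t. (h t)\<^sup>2 - (2 * c) * h t)" using h2 hi by auto
  show "integrable N' (\<lambda>t. (h t - c)\<^sup>2)" unfolding e using i1 by auto
  have "(\<integral>t. (h t - c)\<^sup>2 \<partial>N') = (\<integral>t. (h t)\<^sup>2 - (2 * c) * h t \<partial>N') + c\<^sup>2"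
    unfolding e by (subst Bochner_Integration.integral_add) (use i1 in \<open>auto simp: prob_space\<close>)
  also have "(\<integral>t. (h t)\<^sup>2 - (2 * c) * h t \<partial>N') = (\<integral>t. (h t)\<^sup>2 \<partial>N') - 2 * c * c"
    using h2 hi hc by simp
  finally show "(\<integral>t. (h t - c)\<^sup>2 \<partial>N') = (\<integral>t. (h t)\<^sup>2 \<partial>N') - c\<^sup>2" by (simp add: power2_eq_square)
qed

lemma integral_minus_const:
  assumes "prob_space N'" "integrable N' h"
  shows "(\<integral>t. h t - c \<partial>N') = (\<integral>t. h t \<partial>N') - (c::real)"
proof -
  interpret prob_space N' by fact
  have "(\<integral>t. h t - c \<partial>N') = (\<integral>t. h t \<partial>N') - (\<integral>t. c \<partial>N')"
    by (rule Bochner_Integration.integral_diff) (use assms(2) in auto)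
  then show ?thesis by (simp add: prob_space)
qed

context slice_pos
begin

definition "Aop g = (\<lambda>x. P g x - (\<integral>t. g t \<partial>N))"
definition "Bop f = (\<lambda>t. R f t - (\<integral>x. f x \<partial>M))"

lemma L2M_D: "L2 M f \<Longrightarrow> f \<in> borel_measurable lebesgue \<and> (\<integral>\<^sup>+x. ennreal ((f x)\<^sup>2) \<partial>M) < \<infinity>"
  unfolding L2_def using nn_sq_integrable[of M f] by (auto cong: measurable_cong_sets)

lemma L2N_D: "L2 N g \<Longrightarrow> g \<in> borel_measurable borel \<and> (\<integral>\<^sup>+t. ennreal ((g t)\<^sup>2) \<partial>N) < \<infinity>"
  unfolding L2_def using nn_sq_integrable[of N g] by (auto cong: measurable_cong_sets)

lemma ennreal_le_real: "(\<integral>\<^sup>+x. ennreal ((h x)\<^sup>2) \<partial>MM) \<le> ennreal b \<Longrightarrow> 0 \<le> b \<Longrightarrow> h \<in> borel_measurable MM \<Longrightarrow>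
    integrable MM (\<lambda>x. (h x)\<^sup>2) \<and> (\<integral>x. (h x)\<^sup>2 \<partial>MM) \<le> b"
proof -
  assume a: "(\<integral>\<^sup>+x. ennreal ((h x)\<^sup>2) \<partial>MM) \<le> ennreal b" and b: "0 \<le> b" and hm: "h \<in> borel_measurable MM"
  have "(\<integral>\<^sup>+x. ennreal ((h x)\<^sup>2) \<partial>MM) < \<infinity>" using a by (simp add: le_less_trans)
  then have int: "integrable MM (\<lambda>x. (h x)\<^sup>2)" using hm by (intro integrableI_nonneg) auto
  then show ?thesis using a b nn_sq_integrable[OF int] by simp
qed

lemma B_L2': assumes fL: "L2 M f" shows "L2 N (Bop f) \<and> n2 N (Bop f) \<le> n2 M f"
proof -
  have fm[measurable]: "f \<in> borel_measurable lebesgue" and ff: "(\<integral>\<^sup>+x. ennreal ((f x)\<^sup>2) \<partial>M) < \<infinity>"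
    using L2M_D[OF fL] by auto
  have fi2: "integrable M (\<lambda>x. (f x)\<^sup>2)" using fL by (simp add: L2_def)
  have "(\<integral>\<^sup>+t. ennreal ((R f t)\<^sup>2) \<partial>N) \<le> ennreal (n2 M f)"
    using R_L2[OF fm] nn_sq_integrable[OF fi2] by (simp add: n2_def)
  then have R2: "integrable N (\<lambda>t. (R f t)\<^sup>2)" "(\<integral>t. (R f t)\<^sup>2 \<partial>N) \<le> n2 M f"
    using ennreal_le_real[where h="R f" and MM=N and b="n2 M f"] n2_nonneg[of M f] by auto
  note RP = R_props[OF fm ff]
  have Rm: "R f \<in> borel_measurable N" using R_meas[OF fm] by simp
  note C = center_L2[OF prob_N Rm R2(1) RP(2) RP(3)]
  have L: "L2 N (Bop f)" unfolding Bop_def L2_def using C(1) Rm by auto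
  have "n2 N (Bop f) = (\<integral>t. (R f t)\<^sup>2 \<partial>N) - (\<integral>x. f x \<partial>M)\<^sup>2" unfolding Bop_def n2_def using C(2) by simp
  then have "n2 N (Bop f) \<le> n2 M f" using R2(2) zero_le_power2[of "\<integral>x. f x \<partial>M"] by linarith
  then show ?thesis using L by simp
qed

lemma A_L2': assumes gL: "L2 N g" shows "L2 M (Aop g) \<and> n2 M (Aop g) \<le> n2 N g"
proof -
  have gm[measurable]: "g \<in> borel_measurable borel" and gf: "(\<integral>\<^sup>+t. ennreal ((g t)\<^sup>2) \<partial>N) < \<infinity>"
    using L2N_D[OF gL] by auto
  have gi2: "integrable N (\<lambda>t. (g t)\<^sup>2)" using gL by (simp add: L2_def)
  have "(\<integral>\<^sup>+x. ennreal ((P g x)\<^sup>2) \<partial>M) \<le> ennreal (n2 N g)"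
    using P_L2[OF gm] nn_sq_integrable[OF gi2] by (simp add: n2_def)
  then have P2: "integrable M (\<lambda>x. (P g x)\<^sup>2)" "(\<integral>x. (P g x)\<^sup>2 \<partial>M) \<le> n2 N g"
    using ennreal_le_real[where h="P g" and MM=M and b="n2 N g"] n2_nonneg[of N g] by auto
  note PP = P_props[OF gm gf]
  have Pm: "P g \<in> borel_measurable M" using P_meas[OF gm] by simp
  note C = center_L2[OF prob_M Pm P2(1) PP(2) PP(3)]
  have L: "L2 M (Aop g)" unfolding Aop_def L2_def using C(1) Pm by auto
  have "n2 M (Aop g) = (\<integral>x. (P g x)\<^sup>2 \<partial>M) - (\<integral>t. g t \<partial>N)\<^sup>2" unfolding Aop_def n2_def using C(2) by simp
  then have "n2 M (Aop g) \<le> n2 N g" using P2(2) zero_le_power2[of "\<integral>t. g t \<partial>N"] by linarith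
  then show ?thesis using L by simp
qed

lemma adj': assumes fL: "L2 M f" and gL: "L2 N g"
  shows "(\<integral>x. Aop g x * f x \<partial>M) = (\<integral>t. g t * Bop f t \<partial>N)"
proof -
  have fm[measurable]: "f \<in> borel_measurable lebesgue" and ff: "(\<integral>\<^sup>+x. ennreal ((f x)\<^sup>2) \<partial>M) < \<infinity>"
    using L2M_D[OF fL] by auto
  have gm[measurable]: "g \<in> borel_measurable borel" and gf: "(\<integral>\<^sup>+t. ennreal ((g t)\<^sup>2) \<partial>N) < \<infinity>"
    using L2N_D[OF gL] by auto
  note AP = adj_prod[OF fm gm ff gf]
  have fi: "integrable M f" by (rule L1_of_L2(1)[OF prob_M _ ff]) simp
  have gi: "integrable N g" by (rule L1_of_L2(1)[OF prob_N _ gf]) simp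
  have "(\<integral>x. Aop g x * f x \<partial>M) = (\<integral>x. f x * P g x - (\<integral>t. g t \<partial>N) * f x \<partial>M)"
    unfolding Aop_def by (rule Bochner_Integration.integral_cong) (auto simp: algebra_simps)
  also have "\<dots> = (\<integral>x. f x * P g x \<partial>M) - (\<integral>t. g t \<partial>N) * (\<integral>x. f x \<partial>M)"
    using AP(3) fi by simp
  finally have e1: "(\<integral>x. Aop g x * f x \<partial>M) = (\<integral>x. f x * P g x \<partial>M) - (\<integral>t. g t \<partial>N) * (\<integral>x. f x \<partial>M)" .
  have "(\<integral>t. g t * Bop f t \<partial>N) = (\<integral>t. g t * R f t - (\<integral>x. f x \<partial>M) * g t \<partial>N)"
    unfolding Bop_def by (rule Bochner_Integration.integral_cong) (auto simp: algebra_simps)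
  also have "\<dots> = (\<integral>t. g t * R f t \<partial>N) - (\<integral>x. f x \<partial>M) * (\<integral>t. g t \<partial>N)"
    using AP(4) gi by simp
  finally have e2: "(\<integral>t. g t * Bop f t \<partial>N) = (\<integral>t. g t * R f t \<partial>N) - (\<integral>x. f x \<partial>M) * (\<integral>t. g t \<partial>N)" .
  show ?thesis using AP(5) e1 e2 by simp
qed

lemma Aop_hom: "Aop (\<lambda>t. c * g t) = (\<lambda>x. c * Aop g x)"
  unfolding Aop_def P_def by (auto simp: algebra_simps)

lemma Bop_hom: "Bop (\<lambda>x. c * f x) = (\<lambda>t. c * Bop f t)"
  unfolding Bop_def R_def by (auto simp: algebra_simps)

lemma adjpair: "adjpair M N Aop Bop"
  by unfold_locales (auto dest: B_L2' A_L2' intro: adj' simp: Aop_hom Bop_hom)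

lemma T1_ae: assumes fL: "L2 M f"
  shows "AE x in M. kernel_op (slice_kernel G \<rho>) f x - (\<integral>y. f y \<partial>M) = Aop (Bop f) x"
proof -
  have fm[measurable]: "f \<in> borel_measurable lebesgue" and ff: "(\<integral>\<^sup>+x. ennreal ((f x)\<^sup>2) \<partial>M) < \<infinity>"
    using L2M_D[OF fL] by auto
  note RP = R_props[OF fm ff]
  have Rff: "(\<integral>\<^sup>+t. ennreal ((R f t)\<^sup>2) \<partial>N) < \<infinity>" using R_L2[OF fm] ff by (simp add: le_less_trans)
  note PP = P_props[OF R_meas[OF fm] Rff]
  have EB: "(\<integral>t. Bop f t \<partial>N) = 0"
    unfolding Bop_def using integral_minus_const[OF prob_N RP(2)] RP(3) by simp
  show ?thesis using K_eq[OF fm ff] PP(1) V_prob_AE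
  proof eventually_elim
    case (elim x)
    have "P (Bop f) x = P (R f) x - (\<integral>y. f y \<partial>M)"
      unfolding P_def Bop_def using integral_minus_const[OF elim(3) elim(2)] by simp
    then show ?case unfolding Aop_def EB using elim(1) by simp
  qed
qed

lemma T2_ae: assumes gL: "L2 N g"
  shows "AE t in N. kernel_op (Q_kernel G \<rho>) g t - (\<integral>y. g y \<partial>N) = Bop (Aop g) t"
proof -
  have gm[measurable]: "g \<in> borel_measurable borel" and gf: "(\<integral>\<^sup>+t. ennreal ((g t)\<^sup>2) \<partial>N) < \<infinity>"
    using L2N_D[OF gL] by auto
  note PP = P_props[OF gm gf]
  have Pff: "(\<integral>\<^sup>+x. ennreal ((P g x)\<^sup>2) \<partial>M) < \<infinity>" using P_L2[OF gm] gf by (simp add: le_less_trans)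
  note RP = R_props[OF P_meas[OF gm] Pff]
  have EA: "(\<integral>x. Aop g x \<partial>M) = 0"
    unfolding Aop_def using integral_minus_const[OF prob_M PP(2)] PP(3) by simp
  show ?thesis using Q_eq[OF gm gf] RP(1) U_prob_AE
  proof eventually_elim
    case (elim t)
    have "R (Aop g) t = R (P g) t - (\<integral>y. g y \<partial>N)"
      unfolding R_def Aop_def using integral_minus_const[OF elim(3) elim(2)] by simp
    then show ?case unfolding Bop_def EA using elim(1) by simp
  qed
qed

lemma gap_M: "L2_opnorm M (\<lambda>f x. kernel_op (slice_kernel G \<rho>) f x - (\<integral>y. f y \<partial>M)) = ereal (sqrt (opsup M M (\<lambda>f. Aop (Bop f))))"
proof -
  interpret adjpair M N Aop Bop by (rule adjpair)
  show ?thesis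
  proof (rule L2_opnorm_eq)
    fix f assume "f \<in> Ball2 M"
    then have fL: "L2 M f" and f1: "n2 M f \<le> 1" by (auto simp: Ball2_def)
    have ABL: "L2 M (Aop (Bop f))" and le: "n2 M (Aop (Bop f)) \<le> n2 M f"
      using A_L2[of "Bop f"] B_L2[OF fL] by auto
    show "n2 M (Aop (Bop f)) \<le> 1" using le f1 by simp
    have "(\<integral>\<^sup>+x. ennreal ((kernel_op (slice_kernel G \<rho>) f x - (\<integral>y. f y \<partial>M))\<^sup>2) \<partial>M) = (\<integral>\<^sup>+x. ennreal ((Aop (Bop f) x)\<^sup>2) \<partial>M)"
      by (rule nn_integral_cong_AE) (use T1_ae[OF fL] in \<open>eventually_elim, simp\<close>)
    also have "\<dots> = ennreal (n2 M (Aop (Bop f)))"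
      using ABL nn_sq_integrable[of M "Aop (Bop f)"] by (simp add: L2_def n2_def)
    finally show "(\<integral>\<^sup>+x. ennreal ((kernel_op (slice_kernel G \<rho>) f x - (\<integral>y. f y \<partial>M))\<^sup>2) \<partial>M) = ennreal (n2 M (Aop (Bop f)))" .
  qed
qed

lemma gap_N: "L2_opnorm N (\<lambda>g t. kernel_op (Q_kernel G \<rho>) g t - (\<integral>y. g y \<partial>N)) = ereal (sqrt (opsup N N (\<lambda>g. Bop (Aop g))))"
proof -
  interpret adjpair M N Aop Bop by (rule adjpair)
  show ?thesis
  proof (rule L2_opnorm_eq)
    fix g assume "g \<in> Ball2 N"
    then have gL: "L2 N g" and g1: "n2 N g \<le> 1" by (auto simp: Ball2_def)
    have BAL: "L2 N (Bop (Aop g))" and le: "n2 N (Bop (Aop g)) \<le> n2 N g"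
      using B_L2[of "Aop g"] A_L2[OF gL] by auto
    show "n2 N (Bop (Aop g)) \<le> 1" using le g1 by simp
    have "(\<integral>\<^sup>+t. ennreal ((kernel_op (Q_kernel G \<rho>) g t - (\<integral>y. g y \<partial>N))\<^sup>2) \<partial>N) = (\<integral>\<^sup>+t. ennreal ((Bop (Aop g) t)\<^sup>2) \<partial>N)"
      by (rule nn_integral_cong_AE) (use T2_ae[OF gL] in \<open>eventually_elim, simp\<close>)
    also have "\<dots> = ennreal (n2 N (Bop (Aop g)))"
      using BAL nn_sq_integrable[of N "Bop (Aop g)"] by (simp add: L2_def n2_def)
    finally show "(\<integral>\<^sup>+t. ennreal ((kernel_op (Q_kernel G \<rho>) g t - (\<integral>y. g y \<partial>N))\<^sup>2) \<partial>N) = ennreal (n2 N (Bop (Aop g)))" .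
  qed
qed

theorem gap_eq_pos: "spectral_gap (target G \<rho>) (slice_kernel G \<rho>) = spectral_gap (aux_measure G \<rho>) (Q_kernel G \<rho>)"
proof -
  interpret adjpair M N Aop Bop by (rule adjpair)
  show ?thesis
    unfolding spectral_gap_def M_def[symmetric] N_def[symmetric] gap_M gap_N sup_eq ..
qed

end


lemma opnorm_zero:
  assumes "emeasure MM (space MM) = 0"
  shows "L2_opnorm MM T = 0"
proof -
  have "(SUP f\<in>{f \<in> borel_measurable MM. (\<integral>\<^sup>+x. ennreal ((f x)\<^sup>2) \<partial>MM) \<le> 1}. \<integral>\<^sup>+x. ennreal ((T f x)\<^sup>2) \<partial>MM) = 0"
  proof -
    have "(SUP x\<in>{f \<in> borel_measurable MM. (\<integral>\<^sup>+x. ennreal ((f x)\<^sup>2) \<partial>MM) \<le> 1}. (0::ennreal)) = 0"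
      by (intro antisym SUP_least) auto
    then show ?thesis using zero_measure_integral(2)[OF assms] by simp
  qed
  then show ?thesis unfolding L2_opnorm_def Let_def by (simp add: zero_ereal_def)
qed

lemma spectral_gap_cong_AE:
  assumes "AE t in MM. K t = K' t"
  shows "spectral_gap MM K = spectral_gap MM K'"
proof -
  have "(\<integral>\<^sup>+x. ennreal ((kernel_op K f x - (\<integral>y. f y \<partial>MM))\<^sup>2) \<partial>MM) = (\<integral>\<^sup>+x. ennreal ((kernel_op K' f x - (\<integral>y. f y \<partial>MM))\<^sup>2) \<partial>MM)" for f
    by (rule nn_integral_cong_AE) (use assms in \<open>eventually_elim, simp add: kernel_op_def\<close>)
  then show ?thesis unfolding spectral_gap_def L2_opnorm_def by simp
qed

context slice
begin

theorem gap_eq: "spectral_gap (target G \<rho>) (slice_kernel G \<rho>) = spectral_gap (aux_measure G \<rho>) (Q_kernel G \<rho>)"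
proof (cases "0 < Z")
  case True
  interpret slice_pos G \<rho> by unfold_locales (rule True)
  show ?thesis by (rule gap_eq_pos)
next
  case False
  then have Z0: "Z = 0" using Z_nonneg by simp
  have t0: "target G \<rho> = density lebesgue (\<lambda>_. 0)"
    using M_density unfolding M_def Z0 by simp
  have a0: "aux_measure G \<rho> = density lborel (\<lambda>_. 0)"
    using N_density unfolding N_def Z0 by simp
  have m1: "emeasure (target G \<rho>) (space (target G \<rho>)) = 0"
    unfolding t0 by (subst emeasure_density) auto
  have m2: "emeasure (aux_measure G \<rho>) (space (aux_measure G \<rho>)) = 0"
    unfolding a0 by (subst emeasure_density) auto
  show ?thesis unfolding spectral_gap_def opnorm_zero[OF m1] opnorm_zero[OF m2] ..
qed

lemma AE_aux_pos: "AE t in aux_measure G \<rho>. 0 < t"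
proof -
  have "AE t in lborel. 0 < indicator {0<..} t * level_fun G \<rho> t / Z \<longrightarrow> 0 < t"
  proof (rule AE_I2, rule impI)
    fix t :: real assume a: "0 < indicator {0<..} t * level_fun G \<rho> t / Z"
    show "0 < t"
    proof (rule ccontr)
      assume "\<not> 0 < t"
      then have "indicator {0<..} t = (0::real)" by simp
      then show False using a by simp
    qed
  qed
  then show ?thesis unfolding N_def[symmetric] N_density by (subst AE_density) (simp, simp)
qed

end

lemma Q_kernel_eq2:
  assumes "\<forall>B\<in>sets borel. Q_fun G \<rho> t B = Q_fun G' \<rho>' t B"
  shows "Q_kernel G \<rho> t = Q_kernel G' \<rho>' t"
  unfolding Q_kernel_def
proof (rule measure_of_eq)
  fix a :: "real set" assume "a \<in> sigma_sets UNIV (sets borel)"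
  then have "a \<in> sets (borel :: real measure)" using sets.sigma_sets_eq[of borel] by (metis space_borel)
  then show "ennreal (Q_fun G \<rho> t a) = ennreal (Q_fun G' \<rho>' t a)" using assms by simp
qed simp

theorem mainTheorem6:
  fixes G :: "'a::euclidean_space set" and \<rho> :: "'a \<Rightarrow> real"
    and G' :: "'b::euclidean_space set" and \<rho>' :: "'b \<Rightarrow> real"
  assumes "G \<in> sets lebesgue" and "\<forall>x\<in>G. \<rho> x > 0" and "set_integrable lebesgue G \<rho>"
    and "G' \<in> sets lebesgue" and "\<forall>x\<in>G'. \<rho>' x > 0" and "set_integrable lebesgue G' \<rho>'"
    and "\<forall>t>0. level_fun G \<rho> t = level_fun G' \<rho>' t"
  shows "(\<forall>t>0. \<forall>B\<in>sets borel. Q_fun G \<rho> t B = Q_fun G' \<rho>' t B) \<and>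
         spectral_gap (target G \<rho>) (slice_kernel G \<rho>) = spectral_gap (aux_measure G \<rho>) (Q_kernel G \<rho>) \<and>
         spectral_gap (aux_measure G \<rho>) (Q_kernel G \<rho>) = spectral_gap (aux_measure G \<rho>) (Q_kernel G' \<rho>') \<and>
         spectral_gap (aux_measure G \<rho>) (Q_kernel G' \<rho>') = spectral_gap (target G' \<rho>') (slice_kernel G' \<rho>')"
proof -
  have S1: "slice G \<rho>" using assms(1-3) by unfold_locales auto
  have S2: "slice G' \<rho>'" using assms(4-6) by unfold_locales auto
  interpret A: slice G \<rho> by (rule S1)
  interpret B: slice G' \<rho>' by (rule S2)
  have Q: "\<forall>t>0. \<forall>B\<in>sets borel. Q_fun G \<rho> t B = Q_fun G' \<rho>' t B"
    using Q_fun_eq[OF S1 S2 assms(7)] by blast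
  have c3: "spectral_gap (aux_measure G \<rho>) (Q_kernel G \<rho>) = spectral_gap (aux_measure G \<rho>) (Q_kernel G' \<rho>')"
  proof (rule spectral_gap_cong_AE)
    show "AE t in aux_measure G \<rho>. Q_kernel G \<rho> t = Q_kernel G' \<rho>' t"
      using A.AE_aux_pos
    proof eventually_elim
      case (elim t)
      then show ?case by (intro Q_kernel_eq2) (use Q in simp)
    qed
  qed
  have c4: "spectral_gap (aux_measure G \<rho>) (Q_kernel G' \<rho>') = spectral_gap (target G' \<rho>') (slice_kernel G' \<rho>')"
    unfolding aux_measure_eq[OF assms(7)] B.gap_eq ..
  show ?thesis by (intro conjI Q A.gap_eq c3 c4)
qed


end
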